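(* There exists a $GDD(3,K_4^{(3)}+e,gn)$ of type $g^n$ for each $(g,n)\in\{(5,4),(5,6),(10,5)\}$.
   Context: $K_4^{(3)}+e$ denotes the 3-uniform hypergraph with vertex set $\{1,2,3,4,5\}$ and edge set $\{\{1,2,3\},\{1,2,4\},\{1,3,4\},\{2,3,4\},\{3,4,5\}\}$. A $GDD(3,K_4^{(3)}+e,gn)$ of type $g^n$ is a triple $(X,\mathcal{G},\mathcal{B})$ where $|X|=gn$, $\mathcal{G}$ is a partition of $X$ into $n$ groups of size $g$, and $\mathcal{B}$ is a collection of hypergraphs on subsets of $X$ (blocks), each isomorphic to $K_4^{(3)}+e$, such that each edge of each block meets each group in at most one point, and each 3-subset of $X$ with points in three distinct groups is an edge of exactly one block. *)

theory Defs
  imports Main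
begin

definition K4e_edges :: "nat set set" where
  "K4e_edges = {{1,2,3},{1,2,4},{1,3,4},{2,3,4},{3,4,5}}"

definition is_K4e_block :: "'a set \<Rightarrow> 'a set set \<Rightarrow> bool" where
  "is_K4e_block X b \<longleftrightarrow>
     (\<exists>f. inj_on f {1..5::nat} \<and> f ` {1..5} \<subseteq> X \<and> b = (\<lambda>e. f ` e) ` K4e_edges)"

definition group_partition :: "'a set \<Rightarrow> 'a set set \<Rightarrow> nat \<Rightarrow> nat \<Rightarrow> bool" where
  "group_partition X \<G> g n \<longleftrightarrow>
     \<Union>\<G> = X \<and> (\<forall>A\<in>\<G>. \<forall>B\<in>\<G>. A \<noteq> B \<longrightarrow> A \<inter> B = {}) \<and>
     finite \<G> \<and> card \<G> = n \<and> (\<forall>A\<in>\<G>. A \<noteq> {} \<and> finite A \<and> card A = g)"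

definition transversal_triple :: "'a set \<Rightarrow> 'a set set \<Rightarrow> 'a set \<Rightarrow> bool" where
  "transversal_triple X \<G> T \<longleftrightarrow>
     T \<subseteq> X \<and> card T = 3 \<and> (\<forall>A\<in>\<G>. card (T \<inter> A) \<le> 1)"

definition GDD_K4e :: "'a set \<Rightarrow> 'a set set \<Rightarrow> 'a set set set \<Rightarrow> nat \<Rightarrow> nat \<Rightarrow> bool" where
  "GDD_K4e X \<G> \<B> g n \<longleftrightarrow>
     finite X \<and> card X = g * n \<and> group_partition X \<G> g n \<and>
     (\<forall>b\<in>\<B>. is_K4e_block X b) \<and>
     (\<forall>b\<in>\<B>. \<forall>e\<in>b. \<forall>A\<in>\<G>. card (e \<inter> A) \<le> 1) \<and>
     (\<forall>T. transversal_triple X \<G> T \<longrightarrow> (\<exists>!b. b \<in> \<B> \<and> T \<in> b))"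

end

theory Submission
  imports Defs "HOL-Library.Nat_Bijection"
begin


definition tr :: "nat \<Rightarrow> nat \<Rightarrow> nat \<times> nat \<Rightarrow> nat \<times> nat" where
  "tr g t p = (fst p, (snd p + t) mod g)"
definition Xp :: "nat \<Rightarrow> nat \<Rightarrow> (nat \<times> nat) set" where
  "Xp g n = {0..<n} \<times> {0..<g}"
definition Gp :: "nat \<Rightarrow> nat \<Rightarrow> (nat \<times> nat) set set" where
  "Gp g n = (\<lambda>i. {i} \<times> {0..<g}) ` {0..<n}"
definition pt :: "(nat \<times> nat) list \<Rightarrow> nat \<Rightarrow> nat \<times> nat" where
  "pt bl k = bl ! (k - 1)"
definition EL :: "nat list list" where
  "EL = [[1,2,3],[1,2,4],[1,3,4],[2,3,4],[3,4,5]]"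
definition blockE :: "nat \<Rightarrow> nat \<Rightarrow> (nat \<times> nat) list \<Rightarrow> (nat \<times> nat) set set" where
  "blockE g t bl = (\<lambda>e. (tr g t \<circ> pt bl) ` e) ` K4e_edges"
definition Bset :: "nat \<Rightarrow> (nat \<times> nat) list list \<Rightarrow> (nat \<times> nat) set set set" where
  "Bset g BB = (\<lambda>(t,b). blockE g t (BB ! b)) ` ({0..<g} \<times> {0..<length BB})"
definition GT :: "nat \<Rightarrow> (nat \<times> nat \<times> nat) list" where
  "GT n = [(i,j,k). i \<leftarrow> [0..<n], j \<leftarrow> [Suc i..<n], k \<leftarrow> [Suc j..<n]]"
definition repl :: "nat \<Rightarrow> nat \<Rightarrow> nat \<Rightarrow> (nat \<times> nat) list" where
  "repl g n J = (case GT n ! (J div (g*g)) of (a,b,c) \<Rightarrow> [(a,0),(b,(J div g) mod g),(c, J mod g)])"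
fun chkW :: "nat \<Rightarrow> nat \<Rightarrow> (nat \<times> nat) list list \<Rightarrow> nat \<Rightarrow> (nat \<times> nat \<times> nat) list \<Rightarrow> bool" where
  "chkW g n BB j [] = True"
| "chkW g n BB j ((b,e,t)#ws) = (b < length BB \<and> e < 5 \<and> t < g \<and>
      sort_key fst (map (tr g t \<circ> pt (BB!b)) (EL!e)) = repl g n j \<and> chkW g n BB (j + 1) ws)"
definition validB :: "nat \<Rightarrow> nat \<Rightarrow> (nat \<times> nat) list \<Rightarrow> bool" where
  "validB g n bl \<longleftrightarrow> length bl = 5 \<and> distinct bl \<and> list_all (\<lambda>p. fst p < n \<and> snd p < g) bl \<and>
     list_all (\<lambda>e. distinct (map (\<lambda>k. fst (pt bl k)) e)) EL"

lemma GT4: "GT 4 = [(0,1,2),(0,1,3),(0,2,3),(1,2,3)]"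
  by (simp add: GT_def upt_rec)
lemma GT5: "GT 5 = [(0,1,2),(0,1,3),(0,1,4),(0,2,3),(0,2,4),(0,3,4),(1,2,3),(1,2,4),(1,3,4),(2,3,4)]"
  by (simp add: GT_def upt_rec)
lemma GT6: "GT 6 = [(0,1,2),(0,1,3),(0,1,4),(0,1,5),(0,2,3),(0,2,4),(0,2,5),(0,3,4),(0,3,5),(0,4,5),
  (1,2,3),(1,2,4),(1,2,5),(1,3,4),(1,3,5),(1,4,5),(2,3,4),(2,3,5),(2,4,5),(3,4,5)]"
  by (simp add: GT_def upt_rec)

lemmas chk_simps = tr_def pt_def EL_def repl_def GT4 GT5 GT6

lemma K4e_EL: "K4e_edges = set (map set EL)"
  by (simp add: K4e_edges_def EL_def)

lemma set_GT: "set (GT n) = {(i,j,k). i < j \<and> j < k \<and> k < n}"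
  apply (auto simp: GT_def)
  apply (rule_tac x=a in bexI, rule_tac x=aa in bexI)
  by auto

lemma chkW_append: "chkW g n BB j (xs @ ys) = (chkW g n BB j xs \<and> chkW g n BB (j + length xs) ys)"
  by (induction g n BB j xs rule: chkW.induct) auto

lemma chkW_nth:
  assumes "chkW g n BB j ws" "i < length ws"
  shows "fst (ws!i) < length BB \<and> fst (snd (ws!i)) < 5 \<and> snd (snd (ws!i)) < g \<and>
     sort_key fst (map (tr g (snd (snd (ws!i))) \<circ> pt (BB!(fst (ws!i)))) (EL!(fst (snd (ws!i))))) = repl g n (j+i)"
  using assms
proof (induction g n BB j ws arbitrary: i rule: chkW.induct)
  case (1 g n BB j)
  then show ?case by simp
next
  case (2 g n BB j b e t ws)
  show ?case
  proof (cases i)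
    case 0
    then show ?thesis using 2 by (simp add: comp_def)
  next
    case (Suc i')
    then show ?thesis using 2 by (simp add: comp_def add.commute add.left_commute)
  qed
qed


lemma tr_fst[simp]: "fst (tr g t p) = fst p" by (simp add: tr_def)

lemma tr_comp: "tr g x \<circ> tr g t = tr g ((t + x) mod g)"
  by (rule ext) (simp add: tr_def mod_add_left_eq mod_add_right_eq add.assoc)

lemma mod_cancel_lt:
  fixes x x' t g :: nat
  assumes "x < g" "x' < g" "(x + t) mod g = (x' + t) mod g"
  shows "x = x'"
proof -
  have g: "0 < g" using assms by simp
  have "(x + t + (g*t - t)) mod g = (x' + t + (g*t - t)) mod g"
    using assms(3) by (rule mod_add_cong) simp
  moreover have "t \<le> g * t" using g by simp
  ultimately have "(x + t*g) mod g = (x' + t*g) mod g"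
    by (simp add: algebra_simps)
  thus ?thesis using assms by simp
qed

lemma tr_in: "0 < g \<Longrightarrow> p \<in> Xp g n \<Longrightarrow> tr g t p \<in> Xp g n"
  by (auto simp: tr_def Xp_def)

lemma tr_inj: "inj_on (tr g t) (Xp g n)"
proof (rule inj_onI)
  fix p q assume p: "p \<in> Xp g n" and q: "q \<in> Xp g n" and e: "tr g t p = tr g t q"
  obtain i x where P: "p = (i,x)" by (cases p)
  obtain j y where Q: "q = (j,y)" by (cases q)
  from e have "i = j" "(x + t) mod g = (y + t) mod g" by (auto simp: tr_def P Q)
  moreover have "x < g" "y < g" using p q by (auto simp: Xp_def P Q)
  ultimately show "p = q" using mod_cancel_lt P Q by blast
qed

lemma K4e_sub: "E \<in> K4e_edges \<Longrightarrow> E \<subseteq> {1..5} \<and> card E = 3"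
  by (auto simp: K4e_edges_def)

lemma card_K4e: "card K4e_edges \<le> 5"
proof -
  have "card (set (map set EL)) \<le> length (map set EL)" by (rule card_length)
  thus ?thesis by (simp add: K4e_EL EL_def)
qed

lemma fst_inj_card:
  assumes "inj_on fst S" "finite S"
  shows "card (S \<inter> ({i} \<times> Y)) \<le> 1"
proof -
  have "\<forall>a\<in>S \<inter> ({i}\<times>Y). \<forall>b\<in>S \<inter> ({i}\<times>Y). a = b"
    using assms(1) by (auto simp: inj_on_def) (metis fst_conv snd_conv)
  thus ?thesis using assms(2) by (simp add: card_le_Suc0_iff_eq)
qed

lemma Gp_card_le1:
  assumes "inj_on fst S" "finite S" "A \<in> Gp g n" shows "card (S \<inter> A) \<le> 1"
proof -
  from assms(3) obtain i where "A = {i} \<times> {0..<g}" by (auto simp: Gp_def)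
  thus ?thesis using fst_inj_card[OF assms(1,2)] by simp
qed

lemma sort3:
  fixes a b c :: nat
  assumes "a \<noteq> b" "b \<noteq> c" "a \<noteq> c" "a<n" "b<n" "c<n" "u<g" "v<g" "w<g"
  shows "\<exists>i j k x y z. i<j \<and> j<k \<and> k<n \<and> x<g \<and> y<g \<and> z<g \<and> {(a,u),(b,v),(c,w)} = {(i,x),(j,y),(k,z)}"
proof -
  have "(a<b \<and> b<c) \<or> (a<c \<and> c<b) \<or> (b<a \<and> a<c) \<or> (b<c \<and> c<a) \<or> (c<a \<and> a<b) \<or> (c<b \<and> b<a)"
    using assms by arith
  then show ?thesis
    apply (elim disjE)
    subgoal by (rule exI[of _ a], rule exI[of _ b], rule exI[of _ c], rule exI[of _ u], rule exI[of _ v], rule exI[of _ w]) (use assms in auto)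
    subgoal by (rule exI[of _ a], rule exI[of _ c], rule exI[of _ b], rule exI[of _ u], rule exI[of _ w], rule exI[of _ v]) (use assms in auto)
    subgoal by (rule exI[of _ b], rule exI[of _ a], rule exI[of _ c], rule exI[of _ v], rule exI[of _ u], rule exI[of _ w]) (use assms in auto)
    subgoal by (rule exI[of _ b], rule exI[of _ c], rule exI[of _ a], rule exI[of _ v], rule exI[of _ w], rule exI[of _ u]) (use assms in auto)
    subgoal by (rule exI[of _ c], rule exI[of _ a], rule exI[of _ b], rule exI[of _ w], rule exI[of _ u], rule exI[of _ v]) (use assms in auto)
    subgoal by (rule exI[of _ c], rule exI[of _ b], rule exI[of _ a], rule exI[of _ w], rule exI[of _ v], rule exI[of _ u]) (use assms in auto)
    done
qed

lemma trans_decomp: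
  assumes "transversal_triple (Xp g n) (Gp g n) T"
  shows "\<exists>i j k x y z. i<j \<and> j<k \<and> k<n \<and> x<g \<and> y<g \<and> z<g \<and> T = {(i,x),(j,y),(k,z)}"
proof -
  from assms have sub: "T \<subseteq> Xp g n" and c3: "card T = 3" and grp: "\<forall>A\<in>Gp g n. card (T \<inter> A) \<le> 1"
    by (auto simp: transversal_triple_def)
  from c3 obtain p q r where T: "T = {p,q,r}" and d: "p\<noteq>q" "q\<noteq>r" "p\<noteq>r"
    by (auto simp: card_3_iff)
  have fin: "finite T" using T by simp
  have fd: "fst a \<noteq> fst b" if ab: "a \<in> T" "b\<in>T" "a\<noteq>b" for a b
  proof
    assume eq: "fst a = fst b"
    have a: "a \<in> Xp g n" "b\<in>Xp g n" using ab sub by auto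
    hence A: "{fst a} \<times> {0..<g} \<in> Gp g n" by (auto simp: Xp_def Gp_def)
    have "{a,b} \<subseteq> T \<inter> ({fst a} \<times> {0..<g})" using ab eq a by (auto simp: Xp_def mem_Times_iff)
    hence "card {a,b} \<le> card (T \<inter> ({fst a}\<times>{0..<g}))" by (intro card_mono) (auto simp: fin)
    with grp A ab(3) show False by fastforce
  qed
  obtain a u where P: "p = (a,u)" by (cases p)
  obtain b v where Q: "q = (b,v)" by (cases q)
  obtain c w where R: "r = (c,w)" by (cases r)
  have "fst p \<noteq> fst q" by (rule fd) (use d T in auto)
  moreover have "fst q \<noteq> fst r" by (rule fd) (use d T in auto)
  moreover have "fst p \<noteq> fst r" by (rule fd) (use d T in auto)
  ultimately have "a \<noteq> b" "b \<noteq> c" "a \<noteq> c" using P Q R by auto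
  moreover have "a<n" "b<n" "c<n" "u<g" "v<g" "w<g" using sub T P Q R by (auto simp: Xp_def)
  ultimately show ?thesis using sort3 T P Q R by simp
qed

lemma sorted3_eq:
  fixes a b d a' b' d' :: nat
  assumes "a<b" "b<d" "a'<b'" "b'<d'" "{a,b,d} = {a',b',d'}"
  shows "a = a' \<and> b = b' \<and> d = d'"
proof -
  have "a \<in> {a',b',d'}" "b \<in> {a',b',d'}" "d \<in> {a',b',d'}"
       "a' \<in> {a,b,d}" "b' \<in> {a,b,d}" "d' \<in> {a,b,d}" using assms(5) by blast+
  thus ?thesis using assms(1-4) by auto
qed

lemma card_filter_sum: "finite A \<Longrightarrow> card {x\<in>A. P x} = (\<Sum>x\<in>A. if P x then 1 else 0)"
  using sum.inter_filter[of A "\<lambda>x. 1::nat" P] by simp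

lemma unique_by_count:
  assumes fT: "finite Tr" and fB: "finite B" and sub: "\<forall>\<beta>\<in>B. \<beta> \<subseteq> Tr"
    and ex: "\<forall>T\<in>Tr. \<exists>\<beta>\<in>B. T\<in>\<beta>" and le: "(\<Sum>\<beta>\<in>B. card \<beta>) \<le> card Tr" and T: "T \<in> Tr"
  shows "\<exists>!\<beta>. \<beta> \<in> B \<and> T \<in> \<beta>"
proof -
  define f where "f T = card {\<beta>\<in>B. T \<in> \<beta>}" for T
  have "(\<Sum>\<beta>\<in>B. card \<beta>) = (\<Sum>\<beta>\<in>B. \<Sum>T\<in>Tr. if T \<in> \<beta> then 1 else 0)"
  proof (rule sum.cong[OF refl])
    fix \<beta> assume "\<beta> \<in> B"
    hence "\<beta> = {T\<in>Tr. T \<in> \<beta>}" using sub by auto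
    hence "card \<beta> = card {T\<in>Tr. T \<in> \<beta>}" by simp
    also have "\<dots> = (\<Sum>T\<in>Tr. if T \<in> \<beta> then 1 else 0)" using fT by (rule card_filter_sum)
    finally show "card \<beta> = (\<Sum>T\<in>Tr. if T \<in> \<beta> then 1 else 0)" .
  qed
  also have "\<dots> = (\<Sum>T\<in>Tr. \<Sum>\<beta>\<in>B. if T \<in> \<beta> then 1 else 0)" by (rule sum.swap)
  also have "\<dots> = (\<Sum>T\<in>Tr. f T)"
    by (rule sum.cong[OF refl]) (simp add: f_def fB card_filter_sum)
  finally have s: "(\<Sum>T\<in>Tr. f T) \<le> card Tr" using le by simp
  have ge: "1 \<le> f T" if "T \<in> Tr" for T
  proof -
    have ne: "{\<beta>\<in>B. T \<in> \<beta>} \<noteq> {}" using ex that by blast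
    have "finite {\<beta>\<in>B. T \<in> \<beta>}" using fB by simp
    with ne have "0 < card {\<beta>\<in>B. T \<in> \<beta>}" by (simp only: card_gt_0_iff) blast
    thus ?thesis unfolding f_def by simp
  qed
  have "f T = 1"
  proof (rule ccontr)
    assume "f T \<noteq> 1"
    with ge[OF T] have lt: "1 < f T" by simp
    have "(\<Sum>T\<in>Tr. 1::nat) < (\<Sum>T\<in>Tr. f T)"
    proof (rule sum_strict_mono_ex1[OF fT])
      show "\<forall>x\<in>Tr. 1 \<le> f x" using ge by blast
      show "\<exists>a\<in>Tr. 1 < f a" using T lt by blast
    qed
    thus False using s by simp
  qed
  then obtain \<beta>0 where b0: "{\<beta>\<in>B. T \<in> \<beta>} = {\<beta>0}"
    by (auto simp: f_def card_1_singleton_iff)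
  hence *: "\<forall>\<beta>. (\<beta> \<in> B \<and> T \<in> \<beta>) \<longleftrightarrow> \<beta> = \<beta>0" by (simp add: set_eq_iff)
  show ?thesis
  proof (rule ex1I[of _ \<beta>0])
    show "\<beta>0 \<in> B \<and> T \<in> \<beta>0" using * by blast
    show "\<And>\<beta>. \<beta> \<in> B \<and> T \<in> \<beta> \<Longrightarrow> \<beta> = \<beta>0" using * by blast
  qed
qed



locale gdd_data =
  fixes g n :: nat and BB :: "(nat \<times> nat) list list" and W :: "(nat \<times> nat \<times> nat) list"
  assumes gpos: "0 < g"
    and V: "list_all (validB g n) BB"
    and C: "chkW g n BB 0 W"
    and LW: "length W = length (GT n) * g * g"
    and cnt: "5 * length BB = length (GT n) * g * g"
    and dGT: "distinct (GT n)"
begin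

lemma valid: "bl \<in> set BB \<Longrightarrow> validB g n bl"
  using V by (simp add: list_all_iff)

lemma pt_inj: "validB g n bl \<Longrightarrow> inj_on (pt bl) {1..5}"
  unfolding inj_on_def pt_def validB_def
proof (intro ballI impI)
  fix x y assume v: "length bl = 5 \<and> distinct bl \<and> list_all (\<lambda>p. fst p < n \<and> snd p < g) bl \<and>
     list_all (\<lambda>e. distinct (map (\<lambda>k. fst (bl ! (k - 1))) e)) EL"
    and x: "x \<in> {1..5::nat}" and y: "y \<in> {1..5::nat}" and e: "bl ! (x - 1) = bl ! (y - 1)"
  have l: "x - 1 < length bl" "y - 1 < length bl" using v x y by auto
  have "x - 1 = y - 1" using nth_eq_iff_index_eq[OF _ l] v e by blast
  thus "x = y" using x y by (cases x; cases y) auto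
qed

lemma pt_in: "validB g n bl \<Longrightarrow> k \<in> {1..5} \<Longrightarrow> pt bl k \<in> Xp g n"
proof -
  assume v: "validB g n bl" and k: "k \<in> {1..5}"
  hence "k - 1 < length bl" by (auto simp: validB_def)
  hence "pt bl k \<in> set bl" unfolding pt_def by (rule nth_mem)
  thus ?thesis using v by (auto simp: validB_def list_all_iff Xp_def mem_Times_iff)
qed

lemma pt_img: assumes "validB g n bl" "E \<subseteq> {1..5}" shows "pt bl ` E \<subseteq> Xp g n"
proof
  fix p assume "p \<in> pt bl ` E"
  then obtain k where k: "k \<in> E" "p = pt bl k" by auto
  have "k \<in> {1..5}" using assms(2) k(1) by blast
  thus "p \<in> Xp g n" using k(2) pt_in[OF assms(1)] by simp
qed

lemma trpt_img: assumes "validB g n bl" "E \<subseteq> {1..5}" shows "(tr g t \<circ> pt bl) ` E \<subseteq> Xp g n"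
proof
  fix p assume "p \<in> (tr g t \<circ> pt bl) ` E"
  then obtain k where k: "k \<in> E" "p = tr g t (pt bl k)" by auto
  have "pt bl k \<in> Xp g n" using pt_img[OF assms] k(1) by blast
  thus "p \<in> Xp g n" using k(2) tr_in[OF gpos] by simp
qed

lemma edge_sub: "E \<in> K4e_edges \<Longrightarrow> \<exists>el\<in>set EL. E = set el"
  by (simp add: K4e_EL) blast

lemma edge_props:
  assumes v: "validB g n bl" and E: "E \<in> K4e_edges"
  shows "(tr g t \<circ> pt bl) ` E \<subseteq> Xp g n" "card ((tr g t \<circ> pt bl) ` E) = 3"
    "inj_on fst ((tr g t \<circ> pt bl) ` E)"
proof -
  have E5: "E \<subseteq> {1..5}" and c3: "card E = 3" using K4e_sub[OF E] by auto
  show "(tr g t \<circ> pt bl) ` E \<subseteq> Xp g n"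
    by (rule trpt_img[OF v E5])
  have "inj_on (tr g t \<circ> pt bl) E"
  proof (rule comp_inj_on)
    show "inj_on (pt bl) E" using pt_inj[OF v] E5 by (rule inj_on_subset)
    show "inj_on (tr g t) (pt bl ` E)" using tr_inj by (rule inj_on_subset) (rule pt_img[OF v E5])
  qed
  thus "card ((tr g t \<circ> pt bl) ` E) = 3" using c3 by (metis card_image)
  obtain el where el: "el \<in> set EL" "E = set el" using edge_sub[OF E] by blast
  have "distinct (map (\<lambda>k. fst (pt bl k)) el)" using v el(1) by (auto simp: validB_def list_all_iff)
  hence ij: "inj_on (\<lambda>k. fst (pt bl k)) E" using el(2) by (simp add: distinct_map)
  show "inj_on fst ((tr g t \<circ> pt bl) ` E)"
  proof (rule inj_onI)
    fix a b assume a: "a \<in> (tr g t \<circ> pt bl) ` E" and b: "b \<in> (tr g t \<circ> pt bl) ` E" and f: "fst a = fst b"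
    from a obtain k where k: "k \<in> E" "a = tr g t (pt bl k)" by auto
    from b obtain k' where k': "k' \<in> E" "b = tr g t (pt bl k')" by auto
    have "fst (pt bl k) = fst (pt bl k')" using f k k' by simp
    hence "k = k'" using ij k k' by (auto simp: inj_on_def)
    thus "a = b" using k k' by simp
  qed
qed

lemma edge_trans:
  assumes "validB g n bl" "E \<in> K4e_edges"
  shows "transversal_triple (Xp g n) (Gp g n) ((tr g t \<circ> pt bl) ` E)"
proof -
  note ep = edge_props[OF assms, of t]
  have fin: "finite ((tr g t \<circ> pt bl) ` E)" using ep(2) by (metis card.infinite zero_neq_numeral)
  show ?thesis unfolding transversal_triple_def using ep Gp_card_le1[OF ep(3) fin] by blast
qed

lemma block_K4e: "validB g n bl \<Longrightarrow> is_K4e_block (Xp g n) (blockE g t bl)"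
  unfolding is_K4e_block_def blockE_def
proof (intro exI conjI)
  assume v: "validB g n bl"
  show "inj_on (tr g t \<circ> pt bl) {1..5}"
  proof (rule comp_inj_on)
    show "inj_on (pt bl) {1..5}" using pt_inj[OF v] .
    show "inj_on (tr g t) (pt bl ` {1..5})" using tr_inj by (rule inj_on_subset) (rule pt_img[OF v], simp)
  qed
  show "(tr g t \<circ> pt bl) ` {1..5} \<subseteq> Xp g n" by (rule trpt_img[OF v]) simp
qed simp

lemma Bset_cases:
  assumes "\<beta> \<in> Bset g BB"
  obtains t bl where "t < g" "bl \<in> set BB" "\<beta> = blockE g t bl"
proof -
  from assms obtain t b where tb: "t<g" "b < length BB" "\<beta> = blockE g t (BB!b)" by (auto simp: Bset_def)
  show ?thesis by (rule that[OF tb(1) nth_mem[OF tb(2)] tb(3)])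
qed

lemma in_Bset: "t < g \<Longrightarrow> b < length BB \<Longrightarrow> blockE g t (BB ! b) \<in> Bset g BB"
  unfolding Bset_def by (rule image_eqI[of _ _ "(t,b)"]) auto

lemma arith1:
  fixes c y z m :: nat
  assumes "y < m" "z < m"
  shows "(c*(m*m) + y*m + z) div (m*m) = c" "((c*(m*m) + y*m + z) div m) mod m = y"
    "(c*(m*m) + y*m + z) mod m = z" "y*m + z < m*m"
proof -
  have m: "0 < m" using assms by simp
  have J: "c*(m*m) + y*m + z = (c*m + y)*m + z" by (simp add: algebra_simps)
  have d: "(c*(m*m) + y*m + z) div m = c*m + y" unfolding J using assms m by simp
  show "(c*(m*m) + y*m + z) mod m = z" unfolding J using assms by simp
  show "((c*(m*m) + y*m + z) div m) mod m = y" unfolding d using assms by simp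
  have "y*m + z < y*m + m" using assms by simp
  also have "\<dots> = (y+1)*m" by simp
  also have "\<dots> \<le> m*m" using assms by (intro mult_right_mono) auto
  finally show yz: "y*m + z < m*m" .
  show "(c*(m*m) + y*m + z) div (m*m) = c"
    using yz by (simp add: add.assoc div_mult_self3[symmetric] m)
qed

lemma exist:
  assumes T: "transversal_triple (Xp g n) (Gp g n) T"
  shows "\<exists>\<beta>\<in>Bset g BB. T \<in> \<beta>"
proof -
  obtain i j k x y z where o: "i<j" "j<k" "k<n" "x<g" "y<g" "z<g" and TT: "T = {(i,x),(j,y),(k,z)}"
    using trans_decomp[OF T] by blast
  have "(i,j,k) \<in> set (GT n)" using o by (simp add: set_GT)
  then obtain c where c: "c < length (GT n)" "GT n ! c = (i,j,k)" by (auto simp: in_set_conv_nth)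
  define y' where "y' = (y + g - x) mod g"
  define z' where "z' = (z + g - x) mod g"
  define J where "J = c*(g*g) + y'*g + z'"
  have y'g: "y' < g" and z'g: "z' < g" using gpos by (auto simp: y'_def z'_def)
  note ar = arith1[OF y'g z'g]
  have "J < (c+1)*(g*g)" using ar(4) by (simp add: J_def)
  also have "\<dots> \<le> length (GT n) * (g*g)" using c(1) by (intro mult_right_mono) auto
  finally have JM: "J < length W" using LW by (simp add: mult.assoc)
  have rep: "repl g n J = [(i,0),(j,y'),(k,z')]"
    using ar c(2) by (simp add: repl_def J_def)
  define b where "b = fst (W!J)"
  define e where "e = fst (snd (W!J))"
  define t where "t = snd (snd (W!J))"
  have w: "b < length BB" "e < 5" "t < g"
     "sort_key fst (map (tr g t \<circ> pt (BB!b)) (EL!e)) = [(i,0),(j,y'),(k,z')]"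
    using chkW_nth[OF C JM] rep by (simp_all add: b_def e_def t_def)
  define bl where "bl = BB ! b"
  define E where "E = set (EL!e)"
  have lEL: "length EL = 5" by (simp add: EL_def)
  have E: "E \<in> K4e_edges" unfolding K4e_EL E_def using nth_mem[of e EL] w(2) lEL by simp
  have S: "(tr g t \<circ> pt bl) ` E = {(i,0),(j,y'),(k,z')}"
  proof -
    have "set (sort_key fst (map (tr g t \<circ> pt bl) (EL!e))) = (tr g t \<circ> pt bl) ` E"
      by (simp add: E_def)
    thus ?thesis using w(4) by (simp add: bl_def)
  qed
  have tx: "tr g x ` {(i,0),(j,y'),(k,z')} = T"
  proof -
    have "x \<le> g" using o by simp
    hence "(y' + x) mod g = y" "(z' + x) mod g = z"
      using o by (simp_all add: y'_def z'_def mod_add_left_eq)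
    thus ?thesis using o by (simp add: TT tr_def)
  qed
  have "T = tr g x ` ((tr g t \<circ> pt bl) ` E)" unfolding S using tx by simp
  also have "\<dots> = (tr g x \<circ> (tr g t \<circ> pt bl)) ` E" by (simp only: image_comp)
  also have "tr g x \<circ> (tr g t \<circ> pt bl) = tr g ((t+x) mod g) \<circ> pt bl"
    by (simp add: comp_assoc[symmetric] tr_comp)
  finally have "T \<in> blockE g ((t+x) mod g) bl" using E by (auto simp: blockE_def)
  moreover have "blockE g ((t+x) mod g) bl \<in> Bset g BB"
    unfolding bl_def using gpos w(1) by (intro in_Bset) auto
  ultimately show ?thesis by blast
qed

end


context gdd_data begin

abbreviation "TrS \<equiv> {T. transversal_triple (Xp g n) (Gp g n) T}"

lemma Tr_finite: "finite TrS"
proof -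
  have "TrS \<subseteq> Pow (Xp g n)" by (auto simp: transversal_triple_def)
  moreover have "finite (Pow (Xp g n))" by (simp add: Xp_def)
  ultimately show ?thesis by (rule finite_subset)
qed

lemma GT_props: "c < length (GT n) \<Longrightarrow> GT n ! c = (a,b,d) \<Longrightarrow> a < b \<and> b < d \<and> d < n"
  using nth_mem[of c "GT n"] set_GT[of n] by auto

lemma Tr_card: "length (GT n) * g^3 \<le> card TrS"
proof -
  define D where "D = {0..<length (GT n)} \<times> ({0..<g} \<times> ({0..<g} \<times> {0..<g}))"
  define \<phi> :: "nat \<times> nat \<times> nat \<times> nat \<Rightarrow> (nat \<times> nat) set"
    where "\<phi> = (\<lambda>(c,x,y,z). (case GT n ! c of (a,b,d) \<Rightarrow> {(a,x),(b,y),(d,z)}))"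
  have cD: "card D = length (GT n) * g^3"
    by (simp add: D_def card_cartesian_product power3_eq_cube)
  have inj: "inj_on \<phi> D"
  proof (rule inj_onI)
    fix p q assume p: "p \<in> D" and q: "q \<in> D" and e: "\<phi> p = \<phi> q"
    obtain c x y z where P: "p = (c,x,y,z)" by (cases p) auto
    obtain c' x' y' z' where Q: "q = (c',x',y',z')" by (cases q) auto
    obtain a b d where A: "GT n ! c = (a,b,d)" by (cases "GT n ! c") auto
    obtain a' b' d' where A': "GT n ! c' = (a',b',d')" by (cases "GT n ! c'") auto
    have cl: "c < length (GT n)" "c' < length (GT n)" using p q P Q by (auto simp: D_def)
    have o: "a<b" "b<d" using GT_props[OF cl(1) A] by auto
    have o': "a'<b'" "b'<d'" using GT_props[OF cl(2) A'] by auto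
    have S: "{(a,x),(b,y),(d,z)} = {(a',x'),(b',y'),(d',z')}" using e P Q A A' by (simp add: \<phi>_def)
    have "fst ` {(a,x),(b,y),(d,z)} = fst ` {(a',x'),(b',y'),(d',z')}" using S by simp
    hence "{a,b,d} = {a',b',d'}" by simp
    hence abd: "a=a'" "b=b'" "d=d'" using sorted3_eq[OF o o'] by auto
    hence "GT n ! c = GT n ! c'" using A A' by simp
    hence cc: "c = c'" using nth_eq_iff_index_eq[OF dGT cl] by simp
    have ne: "a \<noteq> b" "a \<noteq> d" "b \<noteq> d" using o by auto
    have "(a,x) \<in> {(a',x'),(b',y'),(d',z')}" unfolding S[symmetric] by simp
    hence xx: "x = x'" using ne unfolding abd[symmetric] by simp
    have "(b,y) \<in> {(a',x'),(b',y'),(d',z')}" unfolding S[symmetric] by simp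
    hence yy: "y = y'" using ne unfolding abd[symmetric] by auto
    have "(d,z) \<in> {(a',x'),(b',y'),(d',z')}" unfolding S[symmetric] by simp
    hence zz: "z = z'" using ne unfolding abd[symmetric] by auto
    show "p = q" using P Q cc xx yy zz by simp
  qed
  have sub: "\<phi> ` D \<subseteq> TrS"
  proof
    fix T assume "T \<in> \<phi> ` D"
    then obtain c x y z where cx: "(c,x,y,z) \<in> D" and T: "T = \<phi> (c,x,y,z)" by auto
    obtain a b d where A: "GT n ! c = (a,b,d)" by (cases "GT n ! c") auto
    have cl: "c < length (GT n)" "x < g" "y < g" "z < g" using cx by (auto simp: D_def)
    have o: "a<b" "b<d" "d<n" using GT_props[OF cl(1) A] by auto
    have TT: "T = {(a,x),(b,y),(d,z)}" using T A by (simp add: \<phi>_def)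
    have s: "T \<subseteq> Xp g n" using TT o cl by (auto simp: Xp_def)
    have c3: "card T = 3" using TT o by simp
    have ij: "inj_on fst T" using TT o by (auto simp: inj_on_def)
    have fin: "finite T" using TT by simp
    show "T \<in> TrS" unfolding mem_Collect_eq transversal_triple_def
      using s c3 Gp_card_le1[OF ij fin] by blast
  qed
  have "card D = card (\<phi> ` D)" using inj by (simp add: card_image)
  also have "\<dots> \<le> card TrS" using sub Tr_finite by (rule card_mono[rotated])
  finally show ?thesis using cD by simp
qed

lemma Bset_finite: "finite (Bset g BB)"
  by (simp add: Bset_def)

lemma card_block: "card (blockE g t bl) \<le> 5"
proof -
  have "card (blockE g t bl) \<le> card K4e_edges" unfolding blockE_def by (rule card_image_le) (simp add: K4e_edges_def)
  thus ?thesis using card_K4e by simp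
qed

lemma sum_le: "(\<Sum>\<beta>\<in>Bset g BB. card \<beta>) \<le> card TrS"
proof -
  have "(\<Sum>\<beta>\<in>Bset g BB. card \<beta>) \<le> of_nat (card (Bset g BB)) * 5"
    by (rule sum_bounded_above) (auto elim: Bset_cases intro: card_block)
  also have "card (Bset g BB) \<le> card ({0..<g} \<times> {0..<length BB})"
    unfolding Bset_def by (rule card_image_le) simp
  hence "of_nat (card (Bset g BB)) * 5 \<le> g * length BB * (5::nat)"
    by (simp add: card_cartesian_product)
  also have "g * length BB * 5 = length (GT n) * g^3"
    using cnt by (simp add: power3_eq_cube algebra_simps)
  also have "\<dots> \<le> card TrS" by (rule Tr_card)
  finally show ?thesis by simp
qed

theorem gdd: "GDD_K4e (Xp g n) (Gp g n) (Bset g BB) g n"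
  unfolding GDD_K4e_def
proof (intro conjI)
  show "finite (Xp g n)" by (simp add: Xp_def)
  show "card (Xp g n) = g * n" by (simp add: Xp_def card_cartesian_product)
  show "group_partition (Xp g n) (Gp g n) g n"
    unfolding group_partition_def
  proof (intro conjI)
    show "\<Union> (Gp g n) = Xp g n" by (auto simp: Gp_def Xp_def)
    show "\<forall>A\<in>Gp g n. \<forall>B\<in>Gp g n. A \<noteq> B \<longrightarrow> A \<inter> B = {}" by (auto simp: Gp_def)
    show "finite (Gp g n)" by (simp add: Gp_def)
    have "inj_on (\<lambda>i. {i} \<times> {0..<g}) {0..<n}"
    proof (rule inj_onI)
      fix i j :: nat assume "i \<in> {0..<n}" "j \<in> {0..<n}" and eq: "{i} \<times> {0..<g} = {j} \<times> {0..<g}"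
      have "(i,0) \<in> {i} \<times> {0..<g}" using gpos by simp
      hence "(i,0) \<in> {j} \<times> {0..<g}" using eq by simp
      thus "i = j" by simp
    qed
    thus "card (Gp g n) = n" by (simp add: Gp_def card_image)
    show "\<forall>A\<in>Gp g n. A \<noteq> {} \<and> finite A \<and> card A = g"
      using gpos by (auto simp: Gp_def card_cartesian_product_singleton)
  qed
  show "\<forall>b\<in>Bset g BB. is_K4e_block (Xp g n) b"
    by (auto elim!: Bset_cases intro: block_K4e valid)
  show "\<forall>b\<in>Bset g BB. \<forall>e\<in>b. \<forall>A\<in>Gp g n. card (e \<inter> A) \<le> 1"
  proof (intro ballI)
    fix \<beta> e A assume b: "\<beta> \<in> Bset g BB" and e: "e \<in> \<beta>" and A: "A \<in> Gp g n"
    obtain t bl where tb: "t < g" "bl \<in> set BB" "\<beta> = blockE g t bl" using b by (rule Bset_cases)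
    obtain E where E: "E \<in> K4e_edges" "e = (tr g t \<circ> pt bl) ` E" using e tb(3) by (auto simp: blockE_def)
    have v: "validB g n bl" using tb(2) by (rule valid)
    have "finite E" using K4e_sub[OF E(1)] by (metis card.infinite zero_neq_numeral)
    hence fin: "finite e" using E(2) by simp
    show "card (e \<inter> A) \<le> 1" using Gp_card_le1[OF _ fin A] edge_props(3)[OF v E(1)] E(2) by simp
  qed
  show "\<forall>T. transversal_triple (Xp g n) (Gp g n) T \<longrightarrow> (\<exists>!b. b \<in> Bset g BB \<and> T \<in> b)"
  proof (intro allI impI)
    fix T assume T: "transversal_triple (Xp g n) (Gp g n) T"
    show "\<exists>!b. b \<in> Bset g BB \<and> T \<in> b"
    proof (rule unique_by_count[OF Tr_finite Bset_finite _ _ sum_le])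
      show "\<forall>\<beta>\<in>Bset g BB. \<beta> \<subseteq> TrS"
      proof (intro ballI subsetI)
        fix \<beta> e assume b: "\<beta> \<in> Bset g BB" and e: "e \<in> \<beta>"
        obtain t bl where tb: "t < g" "bl \<in> set BB" "\<beta> = blockE g t bl" using b by (rule Bset_cases)
        obtain E where E: "E \<in> K4e_edges" "e = (tr g t \<circ> pt bl) ` E" using e tb(3) by (auto simp: blockE_def)
        show "e \<in> TrS" using edge_trans[OF valid[OF tb(2)] E(1)] E(2) by simp
      qed
      show "\<forall>T\<in>TrS. \<exists>\<beta>\<in>Bset g BB. T \<in> \<beta>" using exist by blast
      show "T \<in> TrS" using T by simp
    qed
  qed
qed

end



lemma block_sub:
  assumes "is_K4e_block X \<beta>" "e \<in> \<beta>"
  shows "e \<subseteq> X"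
proof -
  obtain f where f: "inj_on f {1..5::nat}" "f ` {1..5} \<subseteq> X" "\<beta> = (\<lambda>e. f ` e) ` K4e_edges"
    using assms(1) by (auto simp: is_K4e_block_def)
  then obtain E where E: "E \<in> K4e_edges" "e = f ` E" using assms(2) by auto
  have "E \<subseteq> {1..5}" using K4e_sub[OF E(1)] by simp
  thus ?thesis using E(2) f(2) by auto
qed

lemma GDD_transfer:
  assumes G: "GDD_K4e X \<G> \<B> g n" and h: "inj_on h X"
  shows "GDD_K4e (h ` X) ((`) h ` \<G>) ((\<lambda>\<beta>. (`) h ` \<beta>) ` \<B>) g n"
proof -
  from G have fX: "finite X" and cX: "card X = g * n" and gp: "group_partition X \<G> g n"
    and bl: "\<forall>b\<in>\<B>. is_K4e_block X b" and ed: "\<forall>b\<in>\<B>. \<forall>e\<in>b. \<forall>A\<in>\<G>. card (e \<inter> A) \<le> 1"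
    and un: "\<forall>T. transversal_triple X \<G> T \<longrightarrow> (\<exists>!b. b \<in> \<B> \<and> T \<in> b)"
    by (auto simp: GDD_K4e_def)
  from gp have U: "\<Union>\<G> = X" and dj: "\<forall>A\<in>\<G>. \<forall>B\<in>\<G>. A \<noteq> B \<longrightarrow> A \<inter> B = {}"
    and fG: "finite \<G>" and cG: "card \<G> = n" and gA: "\<forall>A\<in>\<G>. A \<noteq> {} \<and> finite A \<and> card A = g"
    by (auto simp: group_partition_def)
  have GX: "A \<subseteq> X" if "A \<in> \<G>" for A using U that by blast
  have injP: "inj_on ((`) h) (Pow X)" using h by (rule inj_on_image_Pow)
  have injG: "inj_on ((`) h) \<G>" using injP by (rule inj_on_subset) (use GX in blast)
  have eX: "e \<subseteq> X" if "\<beta> \<in> \<B>" "e \<in> \<beta>" for \<beta> e using block_sub bl that by blast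
  show ?thesis unfolding GDD_K4e_def
  proof (intro conjI)
    show "finite (h ` X)" using fX by simp
    show "card (h ` X) = g * n" using cX h by (simp add: card_image)
    show "group_partition (h ` X) ((`) h ` \<G>) g n"
      unfolding group_partition_def
    proof (intro conjI)
      show "\<Union> ((`) h ` \<G>) = h ` X" using U by blast
      show "\<forall>A\<in>(`) h ` \<G>. \<forall>B\<in>(`) h ` \<G>. A \<noteq> B \<longrightarrow> A \<inter> B = {}"
      proof (intro ballI impI)
        fix A' B' assume A': "A' \<in> (`) h ` \<G>" and B': "B' \<in> (`) h ` \<G>" and ne: "A' \<noteq> B'"
        obtain A where A: "A \<in> \<G>" "A' = h ` A" using A' by blast
        obtain B where B: "B \<in> \<G>" "B' = h ` B" using B' by blast
        have "A \<noteq> B" using ne A B by blast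
        hence "A \<inter> B = {}" using dj A B by blast
        moreover have "h ` A \<inter> h ` B = h ` (A \<inter> B)"
          using inj_on_image_Int[OF h GX[OF A(1)] GX[OF B(1)]] by simp
        ultimately show "A' \<inter> B' = {}" using A B by simp
      qed
      show "finite ((`) h ` \<G>)" using fG by simp
      show "card ((`) h ` \<G>) = n" using cG injG by (simp add: card_image)
      show "\<forall>A\<in>(`) h ` \<G>. A \<noteq> {} \<and> finite A \<and> card A = g"
      proof
        fix A' assume "A' \<in> (`) h ` \<G>"
        then obtain A where A: "A \<in> \<G>" "A' = h ` A" by blast
        have "inj_on h A" using h GX[OF A(1)] by (rule inj_on_subset)
        thus "A' \<noteq> {} \<and> finite A' \<and> card A' = g" using gA A by (simp add: card_image)
      qed
    qed
    show "\<forall>b\<in>(\<lambda>\<beta>. (`) h ` \<beta>) ` \<B>. is_K4e_block (h ` X) b"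
    proof
      fix b' assume "b' \<in> (\<lambda>\<beta>. (`) h ` \<beta>) ` \<B>"
      then obtain \<beta> where b: "\<beta> \<in> \<B>" "b' = (`) h ` \<beta>" by blast
      obtain f where f: "inj_on f {1..5::nat}" "f ` {1..5} \<subseteq> X" "\<beta> = (\<lambda>e. f ` e) ` K4e_edges"
        using bl b(1) by (auto simp: is_K4e_block_def)
      show "is_K4e_block (h ` X) b'" unfolding is_K4e_block_def
      proof (intro exI conjI)
        show "inj_on (h \<circ> f) {1..5}" using f(1) by (rule comp_inj_on) (rule inj_on_subset[OF h f(2)])
        show "(h \<circ> f) ` {1..5} \<subseteq> h ` X" using f(2) by (auto simp: image_comp[symmetric])
        show "b' = (\<lambda>e. (h \<circ> f) ` e) ` K4e_edges" using b(2) f(3) by (simp add: image_image image_comp)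
      qed
    qed
    show "\<forall>b\<in>(\<lambda>\<beta>. (`) h ` \<beta>) ` \<B>. \<forall>e\<in>b. \<forall>A\<in>(`) h ` \<G>. card (e \<inter> A) \<le> 1"
    proof (intro ballI)
      fix b' e' A' assume b': "b' \<in> (\<lambda>\<beta>. (`) h ` \<beta>) ` \<B>" and e': "e' \<in> b'" and A': "A' \<in> (`) h ` \<G>"
      obtain \<beta> where b: "\<beta> \<in> \<B>" "b' = (`) h ` \<beta>" using b' by blast
      obtain e where e: "e \<in> \<beta>" "e' = h ` e" using e' b(2) by blast
      obtain A where A: "A \<in> \<G>" "A' = h ` A" using A' by blast
      have "h ` e \<inter> h ` A = h ` (e \<inter> A)"
        using inj_on_image_Int[OF h eX[OF b(1) e(1)] GX[OF A(1)]] by simp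
      moreover have "finite (e \<inter> A)" using gA A(1) by blast
      hence "card (h ` (e \<inter> A)) \<le> card (e \<inter> A)" by (rule card_image_le)
      moreover have "card (e \<inter> A) \<le> 1" using ed b(1) e(1) A(1) by blast
      ultimately show "card (e' \<inter> A') \<le> 1" using e(2) A(2) by simp
    qed
    show "\<forall>T. transversal_triple (h ` X) ((`) h ` \<G>) T \<longrightarrow> (\<exists>!b. b \<in> (\<lambda>\<beta>. (`) h ` \<beta>) ` \<B> \<and> T \<in> b)"
    proof (intro allI impI)
      fix T' assume T': "transversal_triple (h ` X) ((`) h ` \<G>) T'"
      have T's: "T' \<subseteq> h ` X" and T'c: "card T' = 3" and T'g: "\<forall>A'\<in>(`) h ` \<G>. card (T' \<inter> A') \<le> 1"
        using T' by (auto simp: transversal_triple_def)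
      define T where "T = X \<inter> h -` T'"
      have TX: "T \<subseteq> X" by (simp add: T_def)
      have hT: "h ` T = T'" using T's by (auto simp: T_def)
      have injT: "inj_on h T" using h TX by (rule inj_on_subset)
      have "card T = 3" using T'c hT injT by (metis card_image)
      moreover have "\<forall>A\<in>\<G>. card (T \<inter> A) \<le> 1"
      proof
        fix A assume A: "A \<in> \<G>"
        have "h ` (T \<inter> A) = T' \<inter> h ` A"
          using inj_on_image_Int[OF h TX GX[OF A]] hT by simp
        moreover have "inj_on h (T \<inter> A)" using injT by (rule inj_on_subset) blast
        ultimately have "card (T \<inter> A) = card (T' \<inter> h ` A)" by (metis card_image)
        thus "card (T \<inter> A) \<le> 1" using T'g A by simp
      qed
      ultimately have Tt: "transversal_triple X \<G> T" using TX by (simp add: transversal_triple_def)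
      then obtain \<beta> where b: "\<beta> \<in> \<B>" "T \<in> \<beta>" and bu: "\<And>\<beta>'. \<beta>' \<in> \<B> \<Longrightarrow> T \<in> \<beta>' \<Longrightarrow> \<beta>' = \<beta>"
        using un by metis
      show "\<exists>!b. b \<in> (\<lambda>\<beta>. (`) h ` \<beta>) ` \<B> \<and> T' \<in> b"
      proof (rule ex1I[of _ "(`) h ` \<beta>"])
        show "(`) h ` \<beta> \<in> (\<lambda>\<beta>. (`) h ` \<beta>) ` \<B> \<and> T' \<in> (`) h ` \<beta>" using b hT by blast
        fix b2' assume b2': "b2' \<in> (\<lambda>\<beta>. (`) h ` \<beta>) ` \<B> \<and> T' \<in> b2'"
        then obtain \<beta>2 where b2: "\<beta>2 \<in> \<B>" "b2' = (`) h ` \<beta>2" by blast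
        then obtain e where e: "e \<in> \<beta>2" "T' = h ` e" using b2' by blast
        have "e = T" using inj_on_image_eq_iff[OF h eX[OF b2(1) e(1)] TX] e(2) hT by simp
        hence "\<beta>2 = \<beta>" using bu b2(1) e(1) by blast
        thus "b2' = (`) h ` \<beta>" using b2(2) by simp
      qed
    qed
  qed
qed

definition bbA0 :: "(nat \<times> nat) list" where "bbA0 = [(2,3),(3,1),(0,0),(1,1),(2,0)]"
definition bbA1 :: "(nat \<times> nat) list" where "bbA1 = [(0,0),(2,2),(1,1),(3,3),(2,0)]"
definition bbA2 :: "(nat \<times> nat) list" where "bbA2 = [(1,2),(2,1),(0,0),(3,1),(2,0)]"
definition bbA3 :: "(nat \<times> nat) list" where "bbA3 = [(1,0),(3,0),(0,0),(2,3),(3,4)]"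
definition bbA4 :: "(nat \<times> nat) list" where "bbA4 = [(2,4),(3,4),(0,0),(1,4),(3,1)]"
definition bbA5 :: "(nat \<times> nat) list" where "bbA5 = [(0,0),(2,4),(1,3),(3,3),(2,2)]"
definition bbA6 :: "(nat \<times> nat) list" where "bbA6 = [(2,3),(3,3),(0,0),(1,2),(3,2)]"
definition bbA7 :: "(nat \<times> nat) list" where "bbA7 = [(0,0),(2,1),(1,0),(3,3),(0,1)]"
definition bbA8 :: "(nat \<times> nat) list" where "bbA8 = [(2,2),(3,1),(0,0),(1,3),(2,3)]"
definition bbA9 :: "(nat \<times> nat) list" where "bbA9 = [(2,0),(3,2),(0,0),(1,3),(3,0)]"
definition bbA10 :: "(nat \<times> nat) list" where "bbA10 = [(0,0),(3,4),(1,0),(2,0),(3,3)]"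
definition bbA11 :: "(nat \<times> nat) list" where "bbA11 = [(0,0),(3,0),(1,4),(2,1),(3,2)]"
definition bbA12 :: "(nat \<times> nat) list" where "bbA12 = [(2,0),(3,3),(0,0),(1,4),(2,3)]"
definition bbA13 :: "(nat \<times> nat) list" where "bbA13 = [(1,2),(3,4),(0,0),(2,2),(3,0)]"
definition bbA14 :: "(nat \<times> nat) list" where "bbA14 = [(2,1),(3,2),(0,0),(1,1),(3,4)]"
definition bbA15 :: "(nat \<times> nat) list" where "bbA15 = [(1,0),(2,2),(0,0),(3,2),(2,3)]"
definition bbA16 :: "(nat \<times> nat) list" where "bbA16 = [(0,0),(3,4),(1,3),(2,1),(0,4)]"
definition bbA17 :: "(nat \<times> nat) list" where "bbA17 = [(1,1),(3,0),(0,0),(2,4),(1,2)]"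
definition bbA18 :: "(nat \<times> nat) list" where "bbA18 = [(1,0),(3,1),(0,0),(2,4),(3,2)]"
definition bbA19 :: "(nat \<times> nat) list" where "bbA19 = [(0,0),(3,0),(1,2),(2,0),(3,4)]"
definition BBA :: "(nat \<times> nat) list list" where "BBA = [bbA0,bbA1,bbA2,bbA3,bbA4,bbA5,bbA6,bbA7,bbA8,bbA9,bbA10,bbA11,bbA12,bbA13,bbA14,bbA15,bbA16,bbA17,bbA18,bbA19]"
lemma BBA_len: "length BBA = 20" by (simp add: BBA_def)
lemma BBA_nth: "BBA ! 0 = bbA0" "BBA ! 1 = bbA1" "BBA ! 2 = bbA2" "BBA ! 3 = bbA3" "BBA ! 4 = bbA4" "BBA ! 5 = bbA5" "BBA ! 6 = bbA6" "BBA ! 7 = bbA7" "BBA ! 8 = bbA8" "BBA ! 9 = bbA9" "BBA ! 10 = bbA10" "BBA ! 11 = bbA11" "BBA ! 12 = bbA12" "BBA ! 13 = bbA13" "BBA ! 14 = bbA14" "BBA ! 15 = bbA15" "BBA ! 16 = bbA16" "BBA ! 17 = bbA17" "BBA ! 18 = bbA18" "BBA ! 19 = bbA19" "BBA ! Suc 0 = bbA1"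
  by (simp_all add: BBA_def)
lemmas bbA_defs = bbA0_def bbA1_def bbA2_def bbA3_def bbA4_def bbA5_def bbA6_def bbA7_def bbA8_def bbA9_def bbA10_def bbA11_def bbA12_def bbA13_def bbA14_def bbA15_def bbA16_def bbA17_def bbA18_def bbA19_def
lemma BBA_valid: "list_all (validB 5 4) BBA"
  by (simp add: BBA_def bbA_defs validB_def EL_def pt_def)
definition WA_0 :: "(nat \<times> nat \<times> nat) list" where "WA_0 = [(10,2,0),(7,0,0),(15,0,0),(3,2,0),(18,2,0),(0,4,0),(14,2,0),(1,0,0),(0,2,0),(17,2,0),(19,2,0),(2,0,0),(13,2,0),(6,2,0),(17,4,0),(9,2,0),(16,2,0),(8,2,0),(8,4,0),(5,0,0),(12,2,0),(11,2,0),(16,4,1),(12,4,0),(4,2,0),(3,0,0),(18,0,0),(15,2,0),(7,2,0),(10,0,0),(17,0,0),(0,3,0),(14,3,0),(1,2,0),(14,4,0),(19,0,0),(2,2,0),(6,4,0),(6,3,0),(13,0,0),(9,4,0),(8,3,0),(9,3,0),(5,2,0),(16,0,0),(11,0,0),(4,4,0),(7,4,4),(12,3,0),(4,3,0)]"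
lemma WA_0_len: "length WA_0 = 50" by (simp add: WA_0_def)
lemma WA_0_ok: "chkW 5 4 BBA 0 WA_0"
  by (simp add: WA_0_def BBA_nth BBA_len bbA_defs chk_simps)
definition WA_1 :: "(nat \<times> nat \<times> nat) list" where "WA_1 = [(19,1,0),(2,4,0),(9,0,0),(12,0,0),(10,1,0),(11,1,0),(2,3,0),(14,0,0),(7,1,0),(16,1,0),(13,4,0),(8,0,0),(15,3,0),(1,1,0),(13,3,0),(3,3,0),(0,0,0),(15,4,0),(6,0,0),(3,4,0),(17,3,0),(18,3,0),(18,4,0),(5,1,0),(4,0,0),(4,1,1),(14,1,4),(13,1,3),(10,4,0),(10,3,0),(5,3,2),(6,1,3),(1,3,4),(7,3,0),(12,1,1),(0,1,4),(11,3,1),(15,1,0),(11,4,1),(9,1,2),(3,1,0),(16,3,2),(19,4,3),(19,3,3),(17,1,4),(5,4,2),(18,1,0),(1,4,4),(8,1,2),(2,1,3)]"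
lemma WA_1_len: "length WA_1 = 50" by (simp add: WA_1_def)
lemma WA_1_ok: "chkW 5 4 BBA 50 WA_1"
  by (simp add: WA_1_def BBA_nth BBA_len bbA_defs chk_simps)
definition WA where "WA = WA_0 @ WA_1"
lemma WA_ok: "chkW 5 4 BBA 0 WA"
  unfolding WA_def chkW_append by (simp add: WA_0_ok WA_0_len WA_1_ok WA_1_len)
lemma WA_length: "length WA = 100"
  unfolding WA_def by (simp add: WA_0_len WA_1_len)
interpretation A: gdd_data 5 4 BBA WA
  by unfold_locales (simp_all add: BBA_valid WA_ok WA_length BBA_len GT4)

definition bbB0 :: "(nat \<times> nat) list" where "bbB0 = [(0,0),(4,4),(1,0),(2,1),(0,3)]"
definition bbB1 :: "(nat \<times> nat) list" where "bbB1 = [(3,2),(5,0),(1,0),(2,2),(0,2)]"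
definition bbB2 :: "(nat \<times> nat) list" where "bbB2 = [(2,3),(5,3),(0,0),(1,3),(2,4)]"
definition bbB3 :: "(nat \<times> nat) list" where "bbB3 = [(4,1),(5,2),(0,0),(2,0),(1,4)]"
definition bbB4 :: "(nat \<times> nat) list" where "bbB4 = [(1,3),(5,4),(0,0),(3,4),(1,0)]"
definition bbB5 :: "(nat \<times> nat) list" where "bbB5 = [(2,0),(4,2),(1,0),(3,1),(0,4)]"
definition bbB6 :: "(nat \<times> nat) list" where "bbB6 = [(4,2),(5,1),(0,0),(3,4),(1,2)]"
definition bbB7 :: "(nat \<times> nat) list" where "bbB7 = [(3,1),(4,1),(0,0),(1,3),(3,2)]"
definition bbB8 :: "(nat \<times> nat) list" where "bbB8 = [(2,4),(4,3),(0,0),(1,4),(3,1)]"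
definition bbB9 :: "(nat \<times> nat) list" where "bbB9 = [(2,3),(5,0),(1,0),(4,0),(0,0)]"
definition bbB10 :: "(nat \<times> nat) list" where "bbB10 = [(0,0),(5,3),(1,4),(4,4),(0,2)]"
definition bbB11 :: "(nat \<times> nat) list" where "bbB11 = [(2,0),(5,1),(1,0),(4,1),(0,3)]"
definition bbB12 :: "(nat \<times> nat) list" where "bbB12 = [(2,3),(3,2),(0,0),(4,4),(1,2)]"
definition bbB13 :: "(nat \<times> nat) list" where "bbB13 = [(4,4),(5,1),(0,0),(1,3),(4,2)]"
definition bbB14 :: "(nat \<times> nat) list" where "bbB14 = [(3,3),(4,2),(0,0),(1,4),(4,1)]"
definition bbB15 :: "(nat \<times> nat) list" where "bbB15 = [(1,4),(2,3),(0,0),(5,1),(1,0)]"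
definition bbB16 :: "(nat \<times> nat) list" where "bbB16 = [(0,0),(4,0),(1,2),(5,0),(0,2)]"
definition bbB17 :: "(nat \<times> nat) list" where "bbB17 = [(4,0),(5,1),(0,0),(1,1),(5,0)]"
definition bbB18 :: "(nat \<times> nat) list" where "bbB18 = [(2,2),(4,1),(1,0),(5,2),(0,3)]"
definition bbB19 :: "(nat \<times> nat) list" where "bbB19 = [(1,3),(2,1),(0,0),(5,0),(1,4)]"
definition bbB20 :: "(nat \<times> nat) list" where "bbB20 = [(0,0),(1,3),(2,2),(3,3),(0,2)]"
definition bbB21 :: "(nat \<times> nat) list" where "bbB21 = [(4,3),(5,3),(0,0),(3,1),(2,1)]"
definition bbB22 :: "(nat \<times> nat) list" where "bbB22 = [(1,1),(5,2),(0,0),(3,3),(2,3)]"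
definition bbB23 :: "(nat \<times> nat) list" where "bbB23 = [(4,2),(5,2),(0,0),(2,4),(3,2)]"
definition bbB24 :: "(nat \<times> nat) list" where "bbB24 = [(3,1),(5,1),(0,0),(2,4),(3,3)]"
definition bbB25 :: "(nat \<times> nat) list" where "bbB25 = [(1,1),(2,3),(0,0),(3,4),(2,4)]"
definition bbB26 :: "(nat \<times> nat) list" where "bbB26 = [(0,0),(5,4),(2,3),(4,1),(0,3)]"
definition bbB27 :: "(nat \<times> nat) list" where "bbB27 = [(3,4),(5,2),(0,0),(4,4),(2,2)]"
definition bbB28 :: "(nat \<times> nat) list" where "bbB28 = [(2,2),(3,2),(0,0),(4,0),(2,3)]"
definition bbB29 :: "(nat \<times> nat) list" where "bbB29 = [(1,0),(5,0),(0,0),(2,4),(4,0)]"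
definition bbB30 :: "(nat \<times> nat) list" where "bbB30 = [(1,2),(5,3),(0,0),(2,4),(4,1)]"
definition bbB31 :: "(nat \<times> nat) list" where "bbB31 = [(1,0),(3,3),(2,0),(4,0),(0,1)]"
definition bbB32 :: "(nat \<times> nat) list" where "bbB32 = [(2,3),(4,3),(0,0),(5,2),(2,1)]"
definition bbB33 :: "(nat \<times> nat) list" where "bbB33 = [(1,1),(4,1),(0,0),(2,2),(5,1)]"
definition bbB34 :: "(nat \<times> nat) list" where "bbB34 = [(1,0),(4,3),(2,3),(5,4),(0,1)]"
definition bbB35 :: "(nat \<times> nat) list" where "bbB35 = [(1,0),(2,0),(0,0),(5,4),(2,2)]"
definition bbB36 :: "(nat \<times> nat) list" where "bbB36 = [(1,0),(3,0),(0,0),(2,3),(5,0)]"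
definition bbB37 :: "(nat \<times> nat) list" where "bbB37 = [(1,1),(3,0),(0,0),(2,4),(5,4)]"
definition bbB38 :: "(nat \<times> nat) list" where "bbB38 = [(3,2),(5,3),(0,0),(4,2),(3,0)]"
definition bbB39 :: "(nat \<times> nat) list" where "bbB39 = [(2,2),(4,3),(0,0),(3,4),(4,0)]"
definition bbB40 :: "(nat \<times> nat) list" where "bbB40 = [(2,1),(3,2),(0,0),(4,1),(3,4)]"
definition bbB41 :: "(nat \<times> nat) list" where "bbB41 = [(1,2),(2,1),(0,0),(3,0),(5,1)]"
definition bbB42 :: "(nat \<times> nat) list" where "bbB42 = [(1,2),(3,2),(0,0),(5,2),(3,0)]"
definition bbB43 :: "(nat \<times> nat) list" where "bbB43 = [(0,0),(2,0),(3,2),(5,1),(0,2)]"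
definition bbB44 :: "(nat \<times> nat) list" where "bbB44 = [(2,3),(4,2),(0,0),(3,1),(5,0)]"
definition bbB45 :: "(nat \<times> nat) list" where "bbB45 = [(0,0),(4,0),(3,1),(5,4),(0,4)]"
definition bbB46 :: "(nat \<times> nat) list" where "bbB46 = [(1,2),(2,0),(0,0),(3,3),(5,1)]"
definition bbB47 :: "(nat \<times> nat) list" where "bbB47 = [(2,0),(4,0),(0,0),(5,3),(3,3)]"
definition bbB48 :: "(nat \<times> nat) list" where "bbB48 = [(2,0),(4,2),(3,4),(5,3),(0,0)]"
definition bbB49 :: "(nat \<times> nat) list" where "bbB49 = [(2,0),(3,3),(4,3),(5,2),(0,2)]"
definition bbB50 :: "(nat \<times> nat) list" where "bbB50 = [(1,0),(2,4),(4,3),(5,1),(0,1)]"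
definition bbB51 :: "(nat \<times> nat) list" where "bbB51 = [(0,0),(1,1),(4,3),(5,4),(0,4)]"
definition bbB52 :: "(nat \<times> nat) list" where "bbB52 = [(0,0),(3,1),(1,2),(2,2),(3,2)]"
definition bbB53 :: "(nat \<times> nat) list" where "bbB53 = [(2,2),(5,3),(1,0),(3,1),(2,1)]"
definition bbB54 :: "(nat \<times> nat) list" where "bbB54 = [(0,0),(5,2),(1,4),(2,2),(3,2)]"
definition bbB55 :: "(nat \<times> nat) list" where "bbB55 = [(4,0),(5,3),(1,0),(2,4),(3,4)]"
definition bbB56 :: "(nat \<times> nat) list" where "bbB56 = [(0,0),(5,3),(1,1),(2,1),(4,4)]"
definition bbB57 :: "(nat \<times> nat) list" where "bbB57 = [(0,0),(1,1),(2,0),(4,2),(1,4)]"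
definition bbB58 :: "(nat \<times> nat) list" where "bbB58 = [(3,4),(4,4),(1,0),(2,2),(4,0)]"
definition bbB59 :: "(nat \<times> nat) list" where "bbB59 = [(1,0),(3,2),(2,1),(4,2),(1,4)]"
definition bbB60 :: "(nat \<times> nat) list" where "bbB60 = [(0,0),(5,1),(1,2),(4,1),(2,0)]"
definition bbB61 :: "(nat \<times> nat) list" where "bbB61 = [(0,0),(2,2),(1,0),(4,2),(2,4)]"
definition bbB62 :: "(nat \<times> nat) list" where "bbB62 = [(0,0),(3,2),(1,4),(5,4),(2,0)]"
definition bbB63 :: "(nat \<times> nat) list" where "bbB63 = [(3,3),(4,4),(1,0),(5,3),(2,1)]"
definition bbB64 :: "(nat \<times> nat) list" where "bbB64 = [(1,0),(4,2),(2,3),(5,1),(1,2)]"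
definition bbB65 :: "(nat \<times> nat) list" where "bbB65 = [(0,0),(3,4),(1,4),(2,1),(5,3)]"
definition bbB66 :: "(nat \<times> nat) list" where "bbB66 = [(4,4),(5,2),(1,0),(3,0),(4,0)]"
definition bbB67 :: "(nat \<times> nat) list" where "bbB67 = [(0,0),(5,2),(1,3),(4,0),(3,3)]"
definition bbB68 :: "(nat \<times> nat) list" where "bbB68 = [(0,0),(3,0),(1,3),(4,3),(3,4)]"
definition bbB69 :: "(nat \<times> nat) list" where "bbB69 = [(0,0),(2,1),(3,3),(4,0),(1,1)]"
definition bbB70 :: "(nat \<times> nat) list" where "bbB70 = [(0,0),(2,0),(3,4),(5,0),(1,4)]"
definition bbB71 :: "(nat \<times> nat) list" where "bbB71 = [(0,0),(4,1),(3,0),(5,3),(1,0)]"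
definition bbB72 :: "(nat \<times> nat) list" where "bbB72 = [(0,0),(4,4),(1,1),(3,1),(5,0)]"
definition bbB73 :: "(nat \<times> nat) list" where "bbB73 = [(0,0),(4,0),(1,4),(3,0),(5,3)]"
definition bbB74 :: "(nat \<times> nat) list" where "bbB74 = [(0,0),(2,2),(3,0),(5,0),(1,3)]"
definition bbB75 :: "(nat \<times> nat) list" where "bbB75 = [(3,4),(4,1),(1,0),(5,4),(3,3)]"
definition bbB76 :: "(nat \<times> nat) list" where "bbB76 = [(1,0),(4,2),(3,3),(5,2),(1,4)]"
definition bbB77 :: "(nat \<times> nat) list" where "bbB77 = [(1,0),(3,1),(4,3),(5,0),(1,3)]"
definition bbB78 :: "(nat \<times> nat) list" where "bbB78 = [(2,3),(3,2),(1,0),(4,1),(5,0)]"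
definition bbB79 :: "(nat \<times> nat) list" where "bbB79 = [(0,0),(3,2),(1,0),(4,3),(5,2)]"
definition bbB80 :: "(nat \<times> nat) list" where "bbB80 = [(2,4),(3,1),(1,0),(4,4),(5,1)]"
definition bbB81 :: "(nat \<times> nat) list" where "bbB81 = [(2,0),(5,4),(3,4),(4,4),(2,4)]"
definition bbB82 :: "(nat \<times> nat) list" where "bbB82 = [(1,0),(2,1),(3,0),(4,1),(2,0)]"
definition bbB83 :: "(nat \<times> nat) list" where "bbB83 = [(1,0),(5,3),(2,0),(3,2),(4,3)]"
definition bbB84 :: "(nat \<times> nat) list" where "bbB84 = [(0,0),(5,4),(2,1),(4,2),(3,4)]"
definition bbB85 :: "(nat \<times> nat) list" where "bbB85 = [(0,0),(4,4),(2,0),(3,0),(5,0)]"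
definition bbB86 :: "(nat \<times> nat) list" where "bbB86 = [(1,0),(4,0),(3,4),(5,1),(2,4)]"
definition bbB87 :: "(nat \<times> nat) list" where "bbB87 = [(4,2),(5,1),(2,0),(3,0),(5,4)]"
definition bbB88 :: "(nat \<times> nat) list" where "bbB88 = [(1,0),(3,2),(2,4),(5,4),(3,0)]"
definition bbB89 :: "(nat \<times> nat) list" where "bbB89 = [(0,0),(1,0),(3,1),(5,2),(2,0)]"
definition bbB90 :: "(nat \<times> nat) list" where "bbB90 = [(4,3),(5,4),(2,0),(3,1),(5,3)]"
definition bbB91 :: "(nat \<times> nat) list" where "bbB91 = [(3,3),(4,2),(2,0),(5,4),(3,2)]"
definition bbB92 :: "(nat \<times> nat) list" where "bbB92 = [(1,0),(2,1),(3,4),(5,2),(2,0)]"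
definition bbB93 :: "(nat \<times> nat) list" where "bbB93 = [(0,0),(3,3),(4,4),(5,4),(2,4)]"
definition bbB94 :: "(nat \<times> nat) list" where "bbB94 = [(0,0),(3,3),(4,3),(5,0),(2,3)]"
definition bbB95 :: "(nat \<times> nat) list" where "bbB95 = [(1,0),(3,3),(2,1),(5,1),(4,2)]"
definition bbB96 :: "(nat \<times> nat) list" where "bbB96 = [(0,0),(4,3),(2,1),(5,1),(4,4)]"
definition bbB97 :: "(nat \<times> nat) list" where "bbB97 = [(1,0),(3,4),(4,2),(5,0),(3,1)]"
definition bbB98 :: "(nat \<times> nat) list" where "bbB98 = [(0,0),(1,0),(3,3),(4,1),(5,1)]"
definition bbB99 :: "(nat \<times> nat) list" where "bbB99 = [(2,0),(4,4),(3,1),(5,1),(4,0)]"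
definition BBB :: "(nat \<times> nat) list list" where "BBB = [bbB0,bbB1,bbB2,bbB3,bbB4,bbB5,bbB6,bbB7,bbB8,bbB9,bbB10,bbB11,bbB12,bbB13,bbB14,bbB15,bbB16,bbB17,bbB18,bbB19,bbB20,bbB21,bbB22,bbB23,bbB24,bbB25,bbB26,bbB27,bbB28,bbB29,bbB30,bbB31,bbB32,bbB33,bbB34,bbB35,bbB36,bbB37,bbB38,bbB39,bbB40,bbB41,bbB42,bbB43,bbB44,bbB45,bbB46,bbB47,bbB48,bbB49,bbB50,bbB51,bbB52,bbB53,bbB54,bbB55,bbB56,bbB57,bbB58,bbB59,bbB60,bbB61,bbB62,bbB63,bbB64,bbB65,bbB66,bbB67,bbB68,bbB69,bbB70,bbB71,bbB72,bbB73,bbB74,bbB75,bbB76,bbB77,bbB78,bbB79,bbB80,bbB81,bbB82,bbB83,bbB84,bbB85,bbB86,bbB87,bbB88,bbB89,bbB90,bbB91,bbB92,bbB93,bbB94,bbB95,bbB96,bbB97,bbB98,bbB99]"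
lemma BBB_len: "length BBB = 100" by (simp add: BBB_def)
lemma BBB_nth: "BBB ! 0 = bbB0" "BBB ! 1 = bbB1" "BBB ! 2 = bbB2" "BBB ! 3 = bbB3" "BBB ! 4 = bbB4" "BBB ! 5 = bbB5" "BBB ! 6 = bbB6" "BBB ! 7 = bbB7" "BBB ! 8 = bbB8" "BBB ! 9 = bbB9" "BBB ! 10 = bbB10" "BBB ! 11 = bbB11" "BBB ! 12 = bbB12" "BBB ! 13 = bbB13" "BBB ! 14 = bbB14" "BBB ! 15 = bbB15" "BBB ! 16 = bbB16" "BBB ! 17 = bbB17" "BBB ! 18 = bbB18" "BBB ! 19 = bbB19" "BBB ! 20 = bbB20" "BBB ! 21 = bbB21" "BBB ! 22 = bbB22" "BBB ! 23 = bbB23" "BBB ! 24 = bbB24" "BBB ! 25 = bbB25" "BBB ! 26 = bbB26" "BBB ! 27 = bbB27" "BBB ! 28 = bbB28" "BBB ! 29 = bbB29" "BBB ! 30 = bbB30" "BBB ! 31 = bbB31" "BBB ! 32 = bbB32" "BBB ! 33 = bbB33" "BBB ! 34 = bbB34" "BBB ! 35 = bbB35" "BBB ! 36 = bbB36" "BBB ! 37 = bbB37" "BBB ! 38 = bbB38" "BBB ! 39 = bbB39" "BBB ! 40 = bbB40" "BBB ! 41 = bbB41" "BBB ! 42 = bbB42" "BBB ! 43 = bbB43" "BBB ! 44 = bbB44" "BBB ! 45 = bbB45" "BBB ! 46 = bbB46" "BBB ! 47 = bbB47" "BBB ! 48 = bbB48" "BBB ! 49 = bbB49" "BBB ! 50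 = bbB50" "BBB ! 51 = bbB51" "BBB ! 52 = bbB52" "BBB ! 53 = bbB53" "BBB ! 54 = bbB54" "BBB ! 55 = bbB55" "BBB ! 56 = bbB56" "BBB ! 57 = bbB57" "BBB ! 58 = bbB58" "BBB ! 59 = bbB59" "BBB ! 60 = bbB60" "BBB ! 61 = bbB61" "BBB ! 62 = bbB62" "BBB ! 63 = bbB63" "BBB ! 64 = bbB64" "BBB ! 65 = bbB65" "BBB ! 66 = bbB66" "BBB ! 67 = bbB67" "BBB ! 68 = bbB68" "BBB ! 69 = bbB69" "BBB ! 70 = bbB70" "BBB ! 71 = bbB71" "BBB ! 72 = bbB72" "BBB ! 73 = bbB73" "BBB ! 74 = bbB74" "BBB ! 75 = bbB75" "BBB ! 76 = bbB76" "BBB ! 77 = bbB77" "BBB ! 78 = bbB78" "BBB ! 79 = bbB79" "BBB ! 80 = bbB80" "BBB ! 81 = bbB81" "BBB ! 82 = bbB82" "BBB ! 83 = bbB83" "BBB ! 84 = bbB84" "BBB ! 85 = bbB85" "BBB ! 86 = bbB86" "BBB ! 87 = bbB87" "BBB ! 88 = bbB88" "BBB ! 89 = bbB89" "BBB ! 90 = bbB90" "BBB ! 91 = bbB91" "BBB ! 92 = bbB92" "BBB ! 93 = bbB93" "BBB ! 94 = bbB94" "BBB ! 95 = bbB95" "BBB ! 96 = bbB96" "BBB ! 97 = bbB97" "BBB ! 98 = bbB98" "BBB ! 99 = bbB99" "BBB ! Suc 0 = bbB1"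
  by (simp_all add: BBB_def)
lemmas bbB_defs = bbB0_def bbB1_def bbB2_def bbB3_def bbB4_def bbB5_def bbB6_def bbB7_def bbB8_def bbB9_def bbB10_def bbB11_def bbB12_def bbB13_def bbB14_def bbB15_def bbB16_def bbB17_def bbB18_def bbB19_def bbB20_def bbB21_def bbB22_def bbB23_def bbB24_def bbB25_def bbB26_def bbB27_def bbB28_def bbB29_def bbB30_def bbB31_def bbB32_def bbB33_def bbB34_def bbB35_def bbB36_def bbB37_def bbB38_def bbB39_def bbB40_def bbB41_def bbB42_def bbB43_def bbB44_def bbB45_def bbB46_def bbB47_def bbB48_def bbB49_def bbB50_def bbB51_def bbB52_def bbB53_def bbB54_def bbB55_def bbB56_def bbB57_def bbB58_def bbB59_def bbB60_def bbB61_def bbB62_def bbB63_def bbB64_def bbB65_def bbB66_def bbB67_def bbB68_def bbB69_def bbB70_def bbB71_def bbB72_def bbB73_def bbB74_def bbB75_def bbB76_def bbB77_def bbB78_def bbB79_def bbB80_def bbB81_def bbB82_def bbB83_def bbB84_def bbB85_def bbB86_def bbB87_def bbB88_def bbB89_def bbB90_def bbB91_def bbB92_def bbB93_def bbB94_def bbB95_def bbB96_def bbB97_def bbB98_def bbB99_def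
lemma BBB_valid: "list_all (validB 5 6) BBB"
  by (simp add: BBB_def bbB_defs validB_def EL_def pt_def)
definition WB_0 :: "(nat \<times> nat \<times> nat) list" where "WB_0 = [(35,0,0),(0,2,0),(61,0,0),(36,2,0),(29,2,0),(57,0,0),(56,2,0),(33,2,0),(25,0,0),(37,2,0),(46,0,0),(41,0,0),(52,2,0),(0,4,2),(30,2,0),(1,4,3),(19,0,0),(20,0,0),(2,2,0),(2,4,0),(3,4,0),(65,2,0),(54,2,0),(15,0,0),(8,2,0),(36,0,0),(89,0,0),(79,0,0),(98,0,0),(4,4,0),(37,0,0),(72,2,0),(5,4,1),(22,2,0),(25,2,0),(41,2,0),(52,0,0),(42,0,0),(46,2,0),(6,4,0),(68,0,0),(7,2,0),(7,4,0),(20,1,0),(4,2,0),(73,2,0),(8,4,0),(62,0,0),(14,2,0),(65,0,0)]"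
lemma WB_0_len: "length WB_0 = 50" by (simp add: WB_0_def)
lemma WB_0_ok: "chkW 5 6 BBB 0 WB_0"
  by (simp add: WB_0_def BBB_nth BBB_len bbB_defs chk_simps)
definition WB_1 :: "(nat \<times> nat \<times> nat) list" where "WB_1 = [(9,4,0),(98,1,0),(61,2,0),(79,2,0),(0,0,0),(17,2,0),(33,0,0),(57,1,0),(51,0,0),(72,0,0),(16,0,0),(60,2,0),(10,4,3),(11,4,2),(12,4,0),(67,2,0),(7,3,0),(13,4,0),(68,2,0),(13,2,0),(73,0,0),(14,4,0),(14,3,0),(8,3,0),(10,2,0),(29,0,0),(15,4,0),(89,1,0),(16,4,3),(35,2,0),(17,4,0),(17,3,0),(22,0,0),(56,0,0),(51,1,0),(16,2,0),(60,0,0),(42,2,0),(30,0,0),(18,4,2),(19,2,0),(13,3,0),(67,0,0),(2,3,0),(4,0,0),(19,4,0),(15,2,0),(54,0,0),(10,0,0),(62,2,0)]"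
lemma WB_1_len: "length WB_1 = 50" by (simp add: WB_1_def)
lemma WB_1_ok: "chkW 5 6 BBB 50 WB_1"
  by (simp add: WB_1_def BBB_nth BBB_len bbB_defs chk_simps)
definition WB_2 :: "(nat \<times> nat \<times> nat) list" where "WB_2 = [(85,2,0),(20,4,3),(43,0,0),(46,3,0),(70,0,0),(41,3,0),(21,4,0),(40,0,0),(69,0,0),(65,1,0),(74,0,0),(52,1,0),(28,0,0),(20,2,0),(39,2,0),(36,3,0),(44,2,0),(12,0,0),(22,4,0),(25,3,0),(37,3,0),(24,2,0),(23,4,0),(24,4,0),(25,4,0),(47,0,0),(3,2,0),(57,2,0),(26,4,2),(85,0,0),(69,1,0),(40,2,0),(84,2,0),(96,0,0),(0,1,0),(28,2,0),(33,3,0),(61,1,0),(39,0,0),(27,4,0),(28,4,0),(26,2,0),(44,0,0),(32,0,0),(12,2,0),(29,4,0),(30,4,0),(23,2,0),(8,0,0),(31,4,4)]"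
lemma WB_2_len: "length WB_2 = 50" by (simp add: WB_2_def)
lemma WB_2_ok: "chkW 5 6 BBB 100 WB_2"
  by (simp add: WB_2_def BBB_nth BBB_len bbB_defs chk_simps)
definition WB_3 :: "(nat \<times> nat \<times> nat) list" where "WB_3 = [(70,1,0),(43,1,0),(3,3,0),(47,2,0),(35,3,0),(19,3,0),(96,2,0),(32,4,0),(56,1,0),(84,0,0),(74,1,0),(33,4,0),(54,1,0),(34,4,4),(35,4,0),(36,4,0),(15,3,0),(32,2,0),(2,0,0),(26,0,0),(29,3,0),(24,3,0),(23,3,0),(30,3,0),(37,4,0),(73,1,0),(71,0,0),(38,4,0),(68,1,0),(85,1,0),(45,0,0),(7,0,0),(44,3,0),(21,2,0),(72,1,0),(28,3,0),(40,3,0),(38,2,0),(79,1,0),(12,3,0),(69,2,0),(98,2,0),(14,0,0),(94,0,0),(93,0,0),(39,4,0),(40,4,0),(6,2,0),(39,3,0),(27,2,0)]"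
lemma WB_3_len: "length WB_3 = 50" by (simp add: WB_3_def)
lemma WB_3_ok: "chkW 5 6 BBB 150 WB_3"
  by (simp add: WB_3_def BBB_nth BBB_len bbB_defs chk_simps)
definition WB_4 :: "(nat \<times> nat \<times> nat) list" where "WB_4 = [(74,2,0),(41,4,0),(42,4,0),(71,2,0),(43,4,3),(44,4,0),(24,0,0),(89,2,0),(21,3,0),(45,2,0),(45,4,1),(43,2,0),(42,3,0),(38,0,0),(62,1,0),(94,1,0),(46,4,0),(22,3,0),(47,4,0),(93,1,0),(70,2,0),(6,3,0),(27,0,0),(48,4,0),(4,3,0),(16,1,0),(17,0,0),(67,1,0),(47,3,0),(45,1,0),(49,4,3),(60,1,0),(3,0,0),(71,1,0),(26,1,0),(50,4,4),(6,0,0),(23,0,0),(38,3,0),(84,1,0),(94,2,0),(96,1,0),(32,3,0),(21,0,0),(51,2,0),(51,4,1),(13,0,0),(27,3,0),(10,1,0),(93,2,0)]"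
lemma WB_4_len: "length WB_4 = 50" by (simp add: WB_4_def)
lemma WB_4_ok: "chkW 5 6 BBB 200 WB_4"
  by (simp add: WB_4_def BBB_nth BBB_len bbB_defs chk_simps)
definition WB_5 :: "(nat \<times> nat \<times> nat) list" where "WB_5 = [(52,4,3),(5,2,0),(83,2,0),(31,0,0),(52,3,3),(82,0,0),(53,4,0),(59,0,0),(95,0,0),(92,0,0),(65,3,1),(53,2,0),(1,2,0),(25,1,4),(58,2,0),(36,1,0),(46,1,3),(78,0,0),(54,4,1),(37,1,4),(20,3,2),(80,0,0),(88,0,0),(41,1,3),(55,4,0),(31,2,0),(11,2,0),(5,0,0),(56,4,4),(8,1,1),(33,1,4),(82,1,0),(59,2,0),(57,4,1),(0,3,0),(58,4,0),(18,0,0),(61,3,0),(59,4,1),(58,3,0),(9,2,0),(78,2,0),(64,0,0),(34,0,0),(60,4,3),(55,2,0),(57,3,4),(61,4,0),(50,0,0),(80,2,0)]"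
lemma WB_5_len: "length WB_5 = 50" by (simp add: WB_5_def)
lemma WB_5_ok: "chkW 5 6 BBB 250 WB_5"
  by (simp add: WB_5_def BBB_nth BBB_len bbB_defs chk_simps)
definition WB_6 :: "(nat \<times> nat \<times> nat) list" where "WB_6 = [(2,1,2),(11,0,0),(56,3,4),(83,0,0),(35,1,0),(62,4,1),(95,2,0),(92,1,0),(63,4,0),(64,4,3),(1,3,0),(30,1,3),(18,2,0),(53,0,0),(65,4,1),(9,0,0),(64,2,0),(19,1,2),(54,3,1),(34,2,0),(29,1,0),(50,1,0),(15,1,1),(55,3,0),(88,2,0),(66,4,0),(82,2,0),(67,4,2),(72,3,4),(66,2,0),(68,4,2),(73,3,1),(5,3,0),(77,0,0),(80,3,0),(68,3,2),(78,3,0),(59,1,0),(79,3,0),(69,4,4),(31,1,0),(98,3,0),(76,0,0),(7,1,2),(63,0,0),(86,0,0),(75,0,0),(97,0,0),(14,1,1),(58,0,0)]"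
lemma WB_6_len: "length WB_6 = 50" by (simp add: WB_6_def)
lemma WB_6_ok: "chkW 5 6 BBB 300 WB_6"
  by (simp add: WB_6_def BBB_nth BBB_len bbB_defs chk_simps)
definition WB_7 :: "(nat \<times> nat \<times> nat) list" where "WB_7 = [(42,1,3),(70,4,1),(66,3,0),(71,4,0),(72,4,4),(77,1,0),(4,1,2),(89,3,0),(53,3,0),(73,4,1),(1,0,0),(22,1,4),(74,4,2),(83,1,0),(88,1,0),(62,3,1),(95,1,0),(76,2,0),(63,2,0),(75,4,0),(97,1,0),(86,2,0),(92,2,0),(76,4,1),(75,2,0),(9,3,0),(86,1,0),(77,4,2),(55,0,0),(10,3,1),(78,4,0),(11,3,0),(18,3,0),(13,1,2),(75,3,0),(97,2,0),(64,1,0),(76,1,0),(51,3,4),(67,3,2),(77,2,0),(50,2,0),(79,4,0),(16,3,3),(34,1,0),(17,1,4),(80,4,0),(66,0,0),(63,3,0),(60,3,3)]"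
lemma WB_7_len: "length WB_7 = 50" by (simp add: WB_7_def)
lemma WB_7_ok: "chkW 5 6 BBB 350 WB_7"
  by (simp add: WB_7_def BBB_nth BBB_len bbB_defs chk_simps)
definition WB_8 :: "(nat \<times> nat \<times> nat) list" where "WB_8 = [(81,4,1),(82,4,0),(87,2,0),(28,1,3),(85,3,0),(40,1,4),(59,3,4),(5,1,0),(90,2,0),(99,0,0),(80,1,1),(39,1,3),(58,1,3),(83,4,0),(69,3,4),(31,3,0),(84,4,4),(91,0,0),(49,0,0),(44,1,2),(82,3,4),(12,1,2),(48,0,0),(78,1,2),(81,2,0),(85,4,0),(87,3,0),(86,4,1),(1,1,3),(87,4,0),(88,4,1),(99,2,0),(89,4,0),(90,4,0),(90,3,0),(95,3,4),(43,3,0),(24,1,1),(83,3,0),(91,4,0),(88,3,1),(92,3,4),(49,1,0),(74,3,3),(91,2,0),(70,3,0),(53,1,3),(92,4,0),(48,2,0),(81,0,0)]"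
lemma WB_8_len: "length WB_8 = 50" by (simp add: WB_8_def)
lemma WB_8_ok: "chkW 5 6 BBB 400 WB_8"
  by (simp add: WB_8_def BBB_nth BBB_len bbB_defs chk_simps)
definition WB_9 :: "(nat \<times> nat \<times> nat) list" where "WB_9 = [(93,4,1),(34,3,2),(94,4,2),(47,1,0),(32,1,2),(95,4,4),(11,1,0),(3,1,0),(84,3,4),(55,1,1),(96,3,4),(87,0,0),(9,1,2),(48,1,0),(91,3,0),(96,4,4),(26,3,2),(49,2,0),(23,1,1),(90,0,0),(18,1,3),(99,1,0),(50,3,1),(64,3,2),(81,1,0),(81,3,1),(38,1,3),(94,3,2),(27,1,1),(49,3,2),(63,1,2),(93,3,2),(86,3,1),(71,3,0),(97,4,4),(75,1,1),(87,1,0),(21,1,4),(90,1,4),(77,3,4),(99,3,4),(97,3,1),(6,1,1),(98,4,2),(48,3,1),(99,4,4),(91,1,2),(66,1,0),(45,3,4),(76,3,2)]"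
lemma WB_9_len: "length WB_9 = 50" by (simp add: WB_9_def)
lemma WB_9_ok: "chkW 5 6 BBB 450 WB_9"
  by (simp add: WB_9_def BBB_nth BBB_len bbB_defs chk_simps)
definition WB where "WB = WB_0 @ WB_1 @ WB_2 @ WB_3 @ WB_4 @ WB_5 @ WB_6 @ WB_7 @ WB_8 @ WB_9"
lemma WB_ok: "chkW 5 6 BBB 0 WB"
  unfolding WB_def chkW_append by (simp add: WB_0_ok WB_0_len WB_1_ok WB_1_len WB_2_ok WB_2_len WB_3_ok WB_3_len WB_4_ok WB_4_len WB_5_ok WB_5_len WB_6_ok WB_6_len WB_7_ok WB_7_len WB_8_ok WB_8_len WB_9_ok WB_9_len)
lemma WB_length: "length WB = 500"
  unfolding WB_def by (simp add: WB_0_len WB_1_len WB_2_len WB_3_len WB_4_len WB_5_len WB_6_len WB_7_len WB_8_len WB_9_len)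
interpretation B: gdd_data 5 6 BBB WB
  by unfold_locales (simp_all add: BBB_valid WB_ok WB_length BBB_len GT6)

definition bbC0 :: "(nat \<times> nat) list" where "bbC0 = [(2,5),(3,1),(0,0),(1,0),(2,4)]"
definition bbC1 :: "(nat \<times> nat) list" where "bbC1 = [(0,0),(4,7),(1,0),(2,0),(0,9)]"
definition bbC2 :: "(nat \<times> nat) list" where "bbC2 = [(2,0),(3,4),(0,0),(1,1),(2,4)]"
definition bbC3 :: "(nat \<times> nat) list" where "bbC3 = [(3,7),(4,2),(1,0),(2,5),(0,9)]"
definition bbC4 :: "(nat \<times> nat) list" where "bbC4 = [(2,6),(3,0),(0,0),(1,2),(2,2)]"
definition bbC5 :: "(nat \<times> nat) list" where "bbC5 = [(2,4),(4,6),(0,0),(1,2),(2,8)]"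
definition bbC6 :: "(nat \<times> nat) list" where "bbC6 = [(1,8),(4,8),(0,0),(2,1),(1,3)]"
definition bbC7 :: "(nat \<times> nat) list" where "bbC7 = [(0,0),(3,7),(1,8),(2,7),(0,4)]"
definition bbC8 :: "(nat \<times> nat) list" where "bbC8 = [(2,5),(4,7),(0,0),(1,4),(2,4)]"
definition bbC9 :: "(nat \<times> nat) list" where "bbC9 = [(0,0),(3,5),(1,7),(2,0),(0,3)]"
definition bbC10 :: "(nat \<times> nat) list" where "bbC10 = [(2,9),(4,9),(0,0),(1,5),(2,0)]"
definition bbC11 :: "(nat \<times> nat) list" where "bbC11 = [(3,6),(4,8),(1,0),(2,9),(0,5)]"
definition bbC12 :: "(nat \<times> nat) list" where "bbC12 = [(0,0),(4,1),(1,3),(2,5),(0,8)]"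
definition bbC13 :: "(nat \<times> nat) list" where "bbC13 = [(3,8),(4,1),(1,0),(2,8),(0,4)]"
definition bbC14 :: "(nat \<times> nat) list" where "bbC14 = [(1,0),(3,8),(0,0),(2,6),(1,6)]"
definition bbC15 :: "(nat \<times> nat) list" where "bbC15 = [(3,0),(4,6),(0,0),(1,7),(2,3)]"
definition bbC16 :: "(nat \<times> nat) list" where "bbC16 = [(1,6),(4,0),(0,0),(2,9),(1,7)]"
definition bbC17 :: "(nat \<times> nat) list" where "bbC17 = [(3,2),(4,0),(0,0),(1,8),(2,5)]"
definition bbC18 :: "(nat \<times> nat) list" where "bbC18 = [(0,0),(4,0),(1,7),(2,1),(0,8)]"
definition bbC19 :: "(nat \<times> nat) list" where "bbC19 = [(2,9),(3,2),(0,0),(1,9),(2,4)]"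
definition bbC20 :: "(nat \<times> nat) list" where "bbC20 = [(2,6),(3,3),(0,0),(1,9),(2,7)]"
definition bbC21 :: "(nat \<times> nat) list" where "bbC21 = [(2,2),(4,0),(0,0),(3,0),(1,0)]"
definition bbC22 :: "(nat \<times> nat) list" where "bbC22 = [(3,4),(4,9),(0,0),(1,0),(3,9)]"
definition bbC23 :: "(nat \<times> nat) list" where "bbC23 = [(2,7),(3,0),(0,0),(1,1),(3,6)]"
definition bbC24 :: "(nat \<times> nat) list" where "bbC24 = [(0,0),(4,6),(1,5),(3,5),(0,3)]"
definition bbC25 :: "(nat \<times> nat) list" where "bbC25 = [(2,6),(4,7),(1,0),(3,1),(0,8)]"
definition bbC26 :: "(nat \<times> nat) list" where "bbC26 = [(2,4),(4,3),(0,0),(3,4),(1,2)]"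
definition bbC27 :: "(nat \<times> nat) list" where "bbC27 = [(2,2),(3,4),(0,0),(1,3),(3,5)]"
definition bbC28 :: "(nat \<times> nat) list" where "bbC28 = [(2,9),(4,1),(1,0),(3,5),(0,7)]"
definition bbC29 :: "(nat \<times> nat) list" where "bbC29 = [(3,5),(4,8),(0,0),(1,4),(3,2)]"
definition bbC30 :: "(nat \<times> nat) list" where "bbC30 = [(3,8),(4,5),(0,0),(1,5),(3,4)]"
definition bbC31 :: "(nat \<times> nat) list" where "bbC31 = [(2,1),(3,2),(0,0),(1,5),(3,6)]"
definition bbC32 :: "(nat \<times> nat) list" where "bbC32 = [(0,0),(4,5),(1,8),(3,4),(0,2)]"
definition bbC33 :: "(nat \<times> nat) list" where "bbC33 = [(1,1),(4,9),(0,0),(3,3),(1,6)]"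
definition bbC34 :: "(nat \<times> nat) list" where "bbC34 = [(0,0),(2,4),(1,3),(3,3),(0,7)]"
definition bbC35 :: "(nat \<times> nat) list" where "bbC35 = [(1,9),(4,0),(0,0),(3,8),(1,6)]"
definition bbC36 :: "(nat \<times> nat) list" where "bbC36 = [(0,0),(2,6),(1,8),(3,1),(0,2)]"
definition bbC37 :: "(nat \<times> nat) list" where "bbC37 = [(0,0),(4,9),(1,9),(3,5),(0,2)]"
definition bbC38 :: "(nat \<times> nat) list" where "bbC38 = [(2,5),(4,6),(0,0),(3,7),(1,7)]"
definition bbC39 :: "(nat \<times> nat) list" where "bbC39 = [(0,0),(4,0),(1,4),(3,9),(0,5)]"
definition bbC40 :: "(nat \<times> nat) list" where "bbC40 = [(2,6),(4,8),(1,0),(3,0),(0,1)]"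
definition bbC41 :: "(nat \<times> nat) list" where "bbC41 = [(2,3),(4,2),(0,0),(1,0),(4,1)]"
definition bbC42 :: "(nat \<times> nat) list" where "bbC42 = [(2,7),(3,1),(1,0),(4,3),(0,0)]"
definition bbC43 :: "(nat \<times> nat) list" where "bbC43 = [(2,2),(3,3),(0,0),(1,0),(4,5)]"
definition bbC44 :: "(nat \<times> nat) list" where "bbC44 = [(3,1),(4,7),(0,0),(1,1),(4,2)]"
definition bbC45 :: "(nat \<times> nat) list" where "bbC45 = [(0,0),(3,1),(1,7),(4,1),(0,6)]"
definition bbC46 :: "(nat \<times> nat) list" where "bbC46 = [(0,0),(2,2),(1,1),(4,6),(0,9)]"
definition bbC47 :: "(nat \<times> nat) list" where "bbC47 = [(2,6),(3,9),(0,0),(4,8),(1,2)]"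
definition bbC48 :: "(nat \<times> nat) list" where "bbC48 = [(2,3),(3,9),(1,0),(4,7),(0,8)]"
definition bbC49 :: "(nat \<times> nat) list" where "bbC49 = [(1,4),(3,1),(0,0),(4,2),(1,3)]"
definition bbC50 :: "(nat \<times> nat) list" where "bbC50 = [(3,6),(4,0),(0,0),(1,3),(4,6)]"
definition bbC51 :: "(nat \<times> nat) list" where "bbC51 = [(0,0),(3,2),(1,0),(4,4),(0,7)]"
definition bbC52 :: "(nat \<times> nat) list" where "bbC52 = [(2,5),(3,3),(1,0),(4,5),(0,5)]"
definition bbC53 :: "(nat \<times> nat) list" where "bbC53 = [(1,4),(2,9),(0,0),(4,3),(1,6)]"
definition bbC54 :: "(nat \<times> nat) list" where "bbC54 = [(2,0),(4,1),(0,0),(1,6),(4,6)]"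
definition bbC55 :: "(nat \<times> nat) list" where "bbC55 = [(2,1),(3,5),(0,0),(1,6),(4,8)]"
definition bbC56 :: "(nat \<times> nat) list" where "bbC56 = [(2,3),(3,0),(0,0),(1,8),(4,2)]"
definition bbC57 :: "(nat \<times> nat) list" where "bbC57 = [(3,6),(4,7),(0,0),(1,8),(4,3)]"
definition bbC58 :: "(nat \<times> nat) list" where "bbC58 = [(1,0),(2,9),(0,0),(4,6),(1,8)]"
definition bbC59 :: "(nat \<times> nat) list" where "bbC59 = [(0,0),(3,4),(1,4),(4,6),(0,5)]"
definition bbC60 :: "(nat \<times> nat) list" where "bbC60 = [(2,5),(3,0),(1,0),(4,3),(0,1)]"
definition bbC61 :: "(nat \<times> nat) list" where "bbC61 = [(2,0),(3,6),(0,0),(1,9),(4,3)]"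
definition bbC62 :: "(nat \<times> nat) list" where "bbC62 = [(3,0),(4,4),(0,0),(2,0),(3,2)]"
definition bbC63 :: "(nat \<times> nat) list" where "bbC63 = [(1,4),(4,5),(0,0),(3,6),(2,2)]"
definition bbC64 :: "(nat \<times> nat) list" where "bbC64 = [(1,9),(3,1),(0,0),(2,2),(3,7)]"
definition bbC65 :: "(nat \<times> nat) list" where "bbC65 = [(0,0),(1,4),(2,8),(3,0),(0,5)]"
definition bbC66 :: "(nat \<times> nat) list" where "bbC66 = [(3,8),(4,6),(0,0),(2,3),(3,6)]"
definition bbC67 :: "(nat \<times> nat) list" where "bbC67 = [(0,0),(1,4),(2,1),(3,7),(0,8)]"
definition bbC68 :: "(nat \<times> nat) list" where "bbC68 = [(1,0),(4,9),(2,2),(3,9),(0,8)]"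
definition bbC69 :: "(nat \<times> nat) list" where "bbC69 = [(1,8),(4,9),(0,0),(2,4),(3,2)]"
definition bbC70 :: "(nat \<times> nat) list" where "bbC70 = [(0,0),(4,1),(2,9),(3,4),(0,4)]"
definition bbC71 :: "(nat \<times> nat) list" where "bbC71 = [(1,7),(3,8),(0,0),(2,5),(3,2)]"
definition bbC72 :: "(nat \<times> nat) list" where "bbC72 = [(1,9),(4,4),(0,0),(2,5),(3,3)]"
definition bbC73 :: "(nat \<times> nat) list" where "bbC73 = [(1,6),(2,7),(0,0),(3,4),(2,5)]"
definition bbC74 :: "(nat \<times> nat) list" where "bbC74 = [(1,0),(4,5),(2,0),(3,6),(0,4)]"
definition bbC75 :: "(nat \<times> nat) list" where "bbC75 = [(1,5),(2,8),(0,0),(3,1),(2,7)]"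
definition bbC76 :: "(nat \<times> nat) list" where "bbC76 = [(1,3),(4,4),(0,0),(2,7),(3,3)]"
definition bbC77 :: "(nat \<times> nat) list" where "bbC77 = [(3,2),(4,6),(0,0),(2,7),(3,5)]"
definition bbC78 :: "(nat \<times> nat) list" where "bbC78 = [(2,1),(4,2),(0,0),(3,8),(2,7)]"
definition bbC79 :: "(nat \<times> nat) list" where "bbC79 = [(0,0),(4,5),(2,4),(3,0),(0,6)]"
definition bbC80 :: "(nat \<times> nat) list" where "bbC80 = [(1,1),(2,9),(0,0),(3,7),(2,8)]"
definition bbC81 :: "(nat \<times> nat) list" where "bbC81 = [(1,0),(4,9),(2,8),(3,7),(0,9)]"
definition bbC82 :: "(nat \<times> nat) list" where "bbC82 = [(1,0),(3,8),(2,0),(4,6),(0,0)]"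
definition bbC83 :: "(nat \<times> nat) list" where "bbC83 = [(1,4),(2,6),(0,0),(4,9),(2,0)]"
definition bbC84 :: "(nat \<times> nat) list" where "bbC84 = [(3,2),(4,3),(0,0),(2,2),(4,4)]"
definition bbC85 :: "(nat \<times> nat) list" where "bbC85 = [(1,1),(4,3),(0,0),(2,3),(4,1)]"
definition bbC86 :: "(nat \<times> nat) list" where "bbC86 = [(1,2),(3,7),(0,0),(2,3),(4,5)]"
definition bbC87 :: "(nat \<times> nat) list" where "bbC87 = [(1,7),(2,6),(0,0),(4,7),(2,3)]"
definition bbC88 :: "(nat \<times> nat) list" where "bbC88 = [(2,2),(3,8),(0,0),(4,9),(2,3)]"
definition bbC89 :: "(nat \<times> nat) list" where "bbC89 = [(2,0),(3,1),(0,0),(4,0),(2,4)]"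
definition bbC90 :: "(nat \<times> nat) list" where "bbC90 = [(0,0),(3,9),(2,7),(4,1),(0,3)]"
definition bbC91 :: "(nat \<times> nat) list" where "bbC91 = [(1,5),(3,9),(0,0),(2,5),(4,2)]"
definition bbC92 :: "(nat \<times> nat) list" where "bbC92 = [(0,0),(3,0),(2,9),(4,7),(0,4)]"
definition bbC93 :: "(nat \<times> nat) list" where "bbC93 = [(1,0),(3,3),(2,3),(4,3),(0,8)]"
definition bbC94 :: "(nat \<times> nat) list" where "bbC94 = [(0,0),(3,3),(2,3),(4,0),(0,7)]"
definition bbC95 :: "(nat \<times> nat) list" where "bbC95 = [(1,6),(2,2),(0,0),(4,5),(2,6)]"
definition bbC96 :: "(nat \<times> nat) list" where "bbC96 = [(3,6),(4,1),(0,0),(2,6),(4,6)]"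
definition bbC97 :: "(nat \<times> nat) list" where "bbC97 = [(1,7),(4,5),(0,0),(2,7),(4,0)]"
definition bbC98 :: "(nat \<times> nat) list" where "bbC98 = [(1,5),(2,2),(0,0),(4,2),(2,7)]"
definition bbC99 :: "(nat \<times> nat) list" where "bbC99 = [(1,0),(3,0),(2,3),(4,9),(0,6)]"
definition bbC100 :: "(nat \<times> nat) list" where "bbC100 = [(1,2),(3,6),(0,0),(2,7),(4,7)]"
definition bbC101 :: "(nat \<times> nat) list" where "bbC101 = [(2,8),(3,6),(0,0),(4,9),(2,7)]"
definition bbC102 :: "(nat \<times> nat) list" where "bbC102 = [(1,8),(3,3),(0,0),(4,1),(2,8)]"
definition bbC103 :: "(nat \<times> nat) list" where "bbC103 = [(0,0),(2,8),(3,3),(4,5),(0,2)]"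
definition bbC104 :: "(nat \<times> nat) list" where "bbC104 = [(2,4),(3,6),(0,0),(4,4),(3,1)]"
definition bbC105 :: "(nat \<times> nat) list" where "bbC105 = [(2,9),(3,5),(0,0),(4,5),(3,1)]"
definition bbC106 :: "(nat \<times> nat) list" where "bbC106 = [(1,9),(2,8),(0,0),(4,6),(3,1)]"
definition bbC107 :: "(nat \<times> nat) list" where "bbC107 = [(0,0),(2,0),(3,3),(4,3),(0,1)]"
definition bbC108 :: "(nat \<times> nat) list" where "bbC108 = [(0,0),(2,1),(3,4),(4,7),(0,2)]"
definition bbC109 :: "(nat \<times> nat) list" where "bbC109 = [(1,0),(2,4),(3,1),(4,6),(0,9)]"
definition bbC110 :: "(nat \<times> nat) list" where "bbC110 = [(1,4),(4,4),(0,0),(3,3),(4,2)]"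
definition bbC111 :: "(nat \<times> nat) list" where "bbC111 = [(2,6),(4,0),(0,0),(3,4),(4,8)]"
definition bbC112 :: "(nat \<times> nat) list" where "bbC112 = [(1,0),(2,8),(0,0),(3,5),(4,0)]"
definition bbC113 :: "(nat \<times> nat) list" where "bbC113 = [(1,8),(2,9),(0,0),(4,4),(3,5)]"
definition bbC114 :: "(nat \<times> nat) list" where "bbC114 = [(2,2),(3,9),(0,0),(4,7),(3,5)]"
definition bbC115 :: "(nat \<times> nat) list" where "bbC115 = [(1,7),(4,3),(0,0),(3,6),(4,6)]"
definition bbC116 :: "(nat \<times> nat) list" where "bbC116 = [(0,0),(2,4),(3,5),(4,1),(0,8)]"
definition bbC117 :: "(nat \<times> nat) list" where "bbC117 = [(1,3),(2,0),(0,0),(4,5),(3,7)]"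
definition bbC118 :: "(nat \<times> nat) list" where "bbC118 = [(0,0),(1,6),(3,0),(4,2),(0,3)]"
definition bbC119 :: "(nat \<times> nat) list" where "bbC119 = [(0,0),(2,4),(3,7),(4,2),(0,9)]"
definition bbC120 :: "(nat \<times> nat) list" where "bbC120 = [(1,2),(4,1),(0,0),(3,8),(4,4)]"
definition bbC121 :: "(nat \<times> nat) list" where "bbC121 = [(1,2),(4,5),(0,0),(3,9),(4,6)]"
definition bbC122 :: "(nat \<times> nat) list" where "bbC122 = [(0,0),(2,3),(3,4),(4,4),(0,5)]"
definition bbC123 :: "(nat \<times> nat) list" where "bbC123 = [(3,5),(4,0),(1,0),(2,0),(3,2)]"
definition bbC124 :: "(nat \<times> nat) list" where "bbC124 = [(0,0),(4,4),(1,6),(3,7),(2,7)]"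
definition bbC125 :: "(nat \<times> nat) list" where "bbC125 = [(1,0),(4,4),(2,5),(3,6),(1,4)]"
definition bbC126 :: "(nat \<times> nat) list" where "bbC126 = [(0,0),(4,3),(2,1),(3,9),(1,9)]"
definition bbC127 :: "(nat \<times> nat) list" where "bbC127 = [(0,0),(4,9),(2,1),(3,1),(1,9)]"
definition bbC128 :: "(nat \<times> nat) list" where "bbC128 = [(0,0),(1,8),(2,2),(3,5),(1,0)]"
definition bbC129 :: "(nat \<times> nat) list" where "bbC129 = [(0,0),(3,9),(1,8),(2,0),(3,5)]"
definition bbC130 :: "(nat \<times> nat) list" where "bbC130 = [(3,4),(4,0),(1,0),(2,2),(3,8)]"
definition bbC131 :: "(nat \<times> nat) list" where "bbC131 = [(0,0),(1,4),(2,0),(3,8),(1,7)]"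
definition bbC132 :: "(nat \<times> nat) list" where "bbC132 = [(0,0),(1,3),(2,6),(3,7),(1,2)]"
definition bbC133 :: "(nat \<times> nat) list" where "bbC133 = [(0,0),(1,7),(2,4),(3,9),(1,0)]"
definition bbC134 :: "(nat \<times> nat) list" where "bbC134 = [(1,0),(4,4),(2,7),(3,0),(1,2)]"
definition bbC135 :: "(nat \<times> nat) list" where "bbC135 = [(1,0),(4,7),(2,4),(3,0),(1,8)]"
definition bbC136 :: "(nat \<times> nat) list" where "bbC136 = [(0,0),(4,8),(1,1),(3,8),(2,8)]"
definition bbC137 :: "(nat \<times> nat) list" where "bbC137 = [(0,0),(4,2),(2,8),(3,9),(1,1)]"
definition bbC138 :: "(nat \<times> nat) list" where "bbC138 = [(0,0),(4,6),(2,1),(3,3),(1,3)]"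
definition bbC139 :: "(nat \<times> nat) list" where "bbC139 = [(0,0),(4,9),(1,6),(2,5),(3,6)]"
definition bbC140 :: "(nat \<times> nat) list" where "bbC140 = [(0,0),(4,1),(1,5),(3,7),(2,4)]"
definition bbC141 :: "(nat \<times> nat) list" where "bbC141 = [(0,0),(1,6),(2,3),(3,1),(1,4)]"
definition bbC142 :: "(nat \<times> nat) list" where "bbC142 = [(0,0),(3,5),(1,2),(4,3),(2,2)]"
definition bbC143 :: "(nat \<times> nat) list" where "bbC143 = [(0,0),(3,2),(1,3),(2,3),(4,6)]"
definition bbC144 :: "(nat \<times> nat) list" where "bbC144 = [(0,0),(3,8),(1,8),(2,8),(4,7)]"
definition bbC145 :: "(nat \<times> nat) list" where "bbC145 = [(0,0),(3,2),(1,1),(4,1),(2,2)]"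
definition bbC146 :: "(nat \<times> nat) list" where "bbC146 = [(1,0),(3,6),(2,2),(4,3),(1,1)]"
definition bbC147 :: "(nat \<times> nat) list" where "bbC147 = [(0,0),(1,5),(2,3),(4,8),(1,1)]"
definition bbC148 :: "(nat \<times> nat) list" where "bbC148 = [(0,0),(3,6),(2,9),(4,2),(1,6)]"
definition bbC149 :: "(nat \<times> nat) list" where "bbC149 = [(0,0),(3,5),(1,1),(2,5),(4,1)]"
definition bbC150 :: "(nat \<times> nat) list" where "bbC150 = [(0,0),(3,7),(2,0),(4,8),(1,6)]"
definition bbC151 :: "(nat \<times> nat) list" where "bbC151 = [(0,0),(4,8),(1,7),(2,2),(4,3)]"
definition bbC152 :: "(nat \<times> nat) list" where "bbC152 = [(3,5),(4,7),(1,0),(2,5),(4,8)]"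
definition bbC153 :: "(nat \<times> nat) list" where "bbC153 = [(1,0),(3,7),(2,0),(4,4),(1,4)]"
definition bbC154 :: "(nat \<times> nat) list" where "bbC154 = [(0,0),(1,7),(2,8),(4,4),(1,2)]"
definition bbC155 :: "(nat \<times> nat) list" where "bbC155 = [(3,5),(4,4),(1,0),(2,6),(4,3)]"
definition bbC156 :: "(nat \<times> nat) list" where "bbC156 = [(0,0),(2,0),(1,2),(4,2),(2,9)]"
definition bbC157 :: "(nat \<times> nat) list" where "bbC157 = [(0,0),(3,1),(1,2),(2,9),(4,3)]"
definition bbC158 :: "(nat \<times> nat) list" where "bbC158 = [(0,0),(3,1),(1,3),(4,8),(2,0)]"
definition bbC159 :: "(nat \<times> nat) list" where "bbC159 = [(0,0),(4,1),(1,4),(2,2),(4,9)]"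
definition bbC160 :: "(nat \<times> nat) list" where "bbC160 = [(3,9),(4,4),(1,0),(2,8),(4,6)]"
definition bbC161 :: "(nat \<times> nat) list" where "bbC161 = [(1,0),(3,4),(2,1),(4,1),(1,2)]"
definition bbC162 :: "(nat \<times> nat) list" where "bbC162 = [(0,0),(3,7),(1,0),(4,0),(3,0)]"
definition bbC163 :: "(nat \<times> nat) list" where "bbC163 = [(0,0),(3,4),(1,7),(4,2),(3,7)]"
definition bbC164 :: "(nat \<times> nat) list" where "bbC164 = [(0,0),(1,9),(3,7),(4,7),(1,6)]"
definition bbC165 :: "(nat \<times> nat) list" where "bbC165 = [(2,9),(3,4),(1,0),(4,5),(3,1)]"
definition bbC166 :: "(nat \<times> nat) list" where "bbC166 = [(2,8),(4,2),(1,0),(3,2),(4,0)]"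
definition bbC167 :: "(nat \<times> nat) list" where "bbC167 = [(1,0),(2,1),(3,3),(4,4),(1,1)]"
definition bbC168 :: "(nat \<times> nat) list" where "bbC168 = [(1,0),(2,6),(3,3),(4,6),(1,1)]"
definition bbC169 :: "(nat \<times> nat) list" where "bbC169 = [(1,0),(2,4),(3,3),(4,8),(1,1)]"
definition bbC170 :: "(nat \<times> nat) list" where "bbC170 = [(2,0),(3,1),(1,0),(4,2),(3,3)]"
definition bbC171 :: "(nat \<times> nat) list" where "bbC171 = [(2,8),(4,8),(1,0),(3,4),(4,3)]"
definition bbC172 :: "(nat \<times> nat) list" where "bbC172 = [(0,0),(1,5),(3,0),(4,3),(1,6)]"
definition bbC173 :: "(nat \<times> nat) list" where "bbC173 = [(0,0),(2,6),(1,5),(4,4),(3,0)]"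
definition bbC174 :: "(nat \<times> nat) list" where "bbC174 = [(0,0),(2,8),(1,6),(4,7),(3,2)]"
definition bbC175 :: "(nat \<times> nat) list" where "bbC175 = [(0,0),(2,1),(1,0),(3,6),(4,2)]"
definition bbC176 :: "(nat \<times> nat) list" where "bbC176 = [(0,0),(2,8),(1,3),(4,3),(3,1)]"
definition bbC177 :: "(nat \<times> nat) list" where "bbC177 = [(0,0),(1,3),(3,0),(4,9),(1,2)]"
definition bbC178 :: "(nat \<times> nat) list" where "bbC178 = [(0,0),(2,1),(1,2),(4,4),(3,1)]"
definition bbC179 :: "(nat \<times> nat) list" where "bbC179 = [(1,0),(2,3),(3,7),(4,1),(1,8)]"
definition bbC180 :: "(nat \<times> nat) list" where "bbC180 = [(2,3),(3,5),(1,0),(4,5),(3,9)]"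
definition bbC181 :: "(nat \<times> nat) list" where "bbC181 = [(0,0),(1,3),(2,9),(3,9),(4,5)]"
definition bbC182 :: "(nat \<times> nat) list" where "bbC182 = [(1,0),(3,2),(2,4),(4,9),(3,5)]"
definition bbC183 :: "(nat \<times> nat) list" where "bbC183 = [(0,0),(1,5),(3,3),(4,7),(2,1)]"
definition bbC184 :: "(nat \<times> nat) list" where "bbC184 = [(0,0),(1,7),(3,2),(4,9),(2,0)]"
definition bbC185 :: "(nat \<times> nat) list" where "bbC185 = [(0,0),(1,0),(2,7),(4,8),(3,0)]"
definition bbC186 :: "(nat \<times> nat) list" where "bbC186 = [(0,0),(1,9),(2,1),(4,5),(3,4)]"
definition bbC187 :: "(nat \<times> nat) list" where "bbC187 = [(0,0),(1,2),(2,5),(4,0),(3,8)]"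
definition bbC188 :: "(nat \<times> nat) list" where "bbC188 = [(1,0),(3,6),(2,7),(4,6),(3,0)]"
definition bbC189 :: "(nat \<times> nat) list" where "bbC189 = [(0,0),(4,8),(2,8),(3,2),(4,3)]"
definition bbC190 :: "(nat \<times> nat) list" where "bbC190 = [(0,0),(4,7),(2,4),(3,8),(4,1)]"
definition bbC191 :: "(nat \<times> nat) list" where "bbC191 = [(1,0),(2,1),(3,9),(4,8),(2,4)]"
definition bbC192 :: "(nat \<times> nat) list" where "bbC192 = [(1,0),(3,8),(2,9),(4,4),(3,4)]"
definition bbC193 :: "(nat \<times> nat) list" where "bbC193 = [(0,0),(2,5),(3,6),(4,8),(2,0)]"
definition bbC194 :: "(nat \<times> nat) list" where "bbC194 = [(0,0),(3,3),(2,9),(4,8),(3,5)]"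
definition bbC195 :: "(nat \<times> nat) list" where "bbC195 = [(0,0),(1,1),(3,9),(4,4),(2,1)]"
definition bbC196 :: "(nat \<times> nat) list" where "bbC196 = [(0,0),(2,1),(3,0),(4,1),(2,2)]"
definition bbC197 :: "(nat \<times> nat) list" where "bbC197 = [(0,0),(1,1),(2,8),(4,0),(3,7)]"
definition bbC198 :: "(nat \<times> nat) list" where "bbC198 = [(0,0),(4,2),(2,6),(3,5),(4,9)]"
definition bbC199 :: "(nat \<times> nat) list" where "bbC199 = [(0,0),(1,9),(3,0),(4,8),(2,1)]"
definition BBC :: "(nat \<times> nat) list list" where "BBC = [bbC0,bbC1,bbC2,bbC3,bbC4,bbC5,bbC6,bbC7,bbC8,bbC9,bbC10,bbC11,bbC12,bbC13,bbC14,bbC15,bbC16,bbC17,bbC18,bbC19,bbC20,bbC21,bbC22,bbC23,bbC24,bbC25,bbC26,bbC27,bbC28,bbC29,bbC30,bbC31,bbC32,bbC33,bbC34,bbC35,bbC36,bbC37,bbC38,bbC39,bbC40,bbC41,bbC42,bbC43,bbC44,bbC45,bbC46,bbC47,bbC48,bbC49,bbC50,bbC51,bbC52,bbC53,bbC54,bbC55,bbC56,bbC57,bbC58,bbC59,bbC60,bbC61,bbC62,bbC63,bbC64,bbC65,bbC66,bbC67,bbC68,bbC69,bbC70,bbC71,bbC72,bbC73,bbC74,bbC75,bbC76,bbC77,bbC78,bbC79,bbC80,bbC81,bbC82,bbC83,bbC84,bbC85,bbC86,bbC87,bbC88,bbC89,bbC90,bbC91,bbC92,bbC93,bbC94,b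bC95,bbC96,bbC97,bbC98,bbC99,bbC100,bbC101,bbC102,bbC103,bbC104,bbC105,bbC106,bbC107,bbC108,bbC109,bbC110,bbC111,bbC112,bbC113,bbC114,bbC115,bbC116,bbC117,bbC118,bbC119,bbC120,bbC121,bbC122,bbC123,bbC124,bbC125,bbC126,bbC127,bbC128,bbC129,bbC130,bbC131,bbC132,bbC133,bbC134,bbC135,bbC136,bbC137,bbC138,bbC139,bbC140,bbC141,bbC142,bbC143,bbC144,bbC145,bbC146,bbC147,bbC148,bbC149,bbC150,bbC151,bbC152,bbC153,bbC154,bbC155,bbC156,bbC157,bbC158,bbC159,bbC160,bbC161,bbC162,bbC163,bbC164,bbC165,bbC166,bbC167,bbC168,bbC169,bbC170,bbC171,bbC172,bbC173,bbC174,bbC175,bbC176,bbC177,bbC178,bbC179,bbC180,bbC181,bbC182,bbC183,bbC184,bbC185,bbC186,bbC187,bbC188,bbC189,bbC190,bbC191,bbC192,bbC193,bbC194,bbC195,bbC196,bbC197,bbC198,bbC199]"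
lemma BBC_len: "length BBC = 200" by (simp add: BBC_def)
lemma BBC_nth: "BBC ! 0 = bbC0" "BBC ! 1 = bbC1" "BBC ! 2 = bbC2" "BBC ! 3 = bbC3" "BBC ! 4 = bbC4" "BBC ! 5 = bbC5" "BBC ! 6 = bbC6" "BBC ! 7 = bbC7" "BBC ! 8 = bbC8" "BBC ! 9 = bbC9" "BBC ! 10 = bbC10" "BBC ! 11 = bbC11" "BBC ! 12 = bbC12" "BBC ! 13 = bbC13" "BBC ! 14 = bbC14" "BBC ! 15 = bbC15" "BBC ! 16 = bbC16" "BBC ! 17 = bbC17" "BBC ! 18 = bbC18" "BBC ! 19 = bbC19" "BBC ! 20 = bbC20" "BBC ! 21 = bbC21" "BBC ! 22 = bbC22" "BBC ! 23 = bbC23" "BBC ! 24 = bbC24" "BBC ! 25 = bbC25" "BBC ! 26 = bbC26" "BBC ! 27 = bbC27" "BBC ! 28 = bbC28" "BBC ! 29 = bbC29" "BBC ! 30 = bbC30" "BBC ! 31 = bbC31" "BBC ! 32 = bbC32" "BBC ! 33 = bbC33" "BBC ! 34 = bbC34" "BBC ! 35 = bbC35" "BBC ! 36 = bbC36" "BBC ! 37 = bbC37" "BBC ! 38 = bbC38" "BBC ! 39 = bbC39" "BBC ! 40 = bbC40" "BBC ! 41 = bbC41" "BBC ! 42 = bbC42" "BBC ! 43 = bbC43" "BBC ! 44 = bbC44" "BBC ! 45 = bbC45" "BBC ! 46 = bbC46" "BBC ! 47 = bbC47" "BBC ! 48 = bbC48" "BBC ! 49 = bbC49" "BBC ! 50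 = bbC50" "BBC ! 51 = bbC51" "BBC ! 52 = bbC52" "BBC ! 53 = bbC53" "BBC ! 54 = bbC54" "BBC ! 55 = bbC55" "BBC ! 56 = bbC56" "BBC ! 57 = bbC57" "BBC ! 58 = bbC58" "BBC ! 59 = bbC59" "BBC ! 60 = bbC60" "BBC ! 61 = bbC61" "BBC ! 62 = bbC62" "BBC ! 63 = bbC63" "BBC ! 64 = bbC64" "BBC ! 65 = bbC65" "BBC ! 66 = bbC66" "BBC ! 67 = bbC67" "BBC ! 68 = bbC68" "BBC ! 69 = bbC69" "BBC ! 70 = bbC70" "BBC ! 71 = bbC71" "BBC ! 72 = bbC72" "BBC ! 73 = bbC73" "BBC ! 74 = bbC74" "BBC ! 75 = bbC75" "BBC ! 76 = bbC76" "BBC ! 77 = bbC77" "BBC ! 78 = bbC78" "BBC ! 79 = bbC79" "BBC ! 80 = bbC80" "BBC ! 81 = bbC81" "BBC ! 82 = bbC82" "BBC ! 83 = bbC83" "BBC ! 84 = bbC84" "BBC ! 85 = bbC85" "BBC ! 86 = bbC86" "BBC ! 87 = bbC87" "BBC ! 88 = bbC88" "BBC ! 89 = bbC89" "BBC ! 90 = bbC90" "BBC ! 91 = bbC91" "BBC ! 92 = bbC92" "BBC ! 93 = bbC93" "BBC ! 94 = bbC94" "BBC ! 95 = bbC95" "BBC ! 96 = bbC96" "BBC ! 97 = bbC97" "BBC ! 98 = bbC98" "BBC ! 99 = bbC99" "BBC ! 100 = bbC100" "BBC ! 101 = bbC101" "BBC ! 102 = bbC102" "BBC ! 103 = bbC103"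 "BBC ! 104 = bbC104" "BBC ! 105 = bbC105" "BBC ! 106 = bbC106" "BBC ! 107 = bbC107" "BBC ! 108 = bbC108" "BBC ! 109 = bbC109" "BBC ! 110 = bbC110" "BBC ! 111 = bbC111" "BBC ! 112 = bbC112" "BBC ! 113 = bbC113" "BBC ! 114 = bbC114" "BBC ! 115 = bbC115" "BBC ! 116 = bbC116" "BBC ! 117 = bbC117" "BBC ! 118 = bbC118" "BBC ! 119 = bbC119" "BBC ! 120 = bbC120" "BBC ! 121 = bbC121" "BBC ! 122 = bbC122" "BBC ! 123 = bbC123" "BBC ! 124 = bbC124" "BBC ! 125 = bbC125" "BBC ! 126 = bbC126" "BBC ! 127 = bbC127" "BBC ! 128 = bbC128" "BBC ! 129 = bbC129" "BBC ! 130 = bbC130" "BBC ! 131 = bbC131" "BBC ! 132 = bbC132" "BBC ! 133 = bbC133" "BBC ! 134 = bbC134" "BBC ! 135 = bbC135" "BBC ! 136 = bbC136" "BBC ! 137 = bbC137" "BBC ! 138 = bbC138" "BBC ! 139 = bbC139" "BBC ! 140 = bbC140" "BBC ! 141 = bbC141" "BBC ! 142 = bbC142" "BBC ! 143 = bbC143" "BBC ! 144 = bbC144" "BBC ! 145 = bbC145" "BBC ! 146 = bbC146" "BBC ! 147 = bbC147" "BBC ! 148 = bbC148" "BBC ! 149 = bbC149" "BBC ! 150 = bbC150" "BBC ! 151 = bbC151" "BBC ! 152 = bbC152" "BBC ! 153 = bbC153" "BBC ! 154 = bbC154" "BBC ! 155 = bbC155" "BBC ! 156 = bbC156" "BBC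 ! 157 = bbC157" "BBC ! 158 = bbC158" "BBC ! 159 = bbC159" "BBC ! 160 = bbC160" "BBC ! 161 = bbC161" "BBC ! 162 = bbC162" "BBC ! 163 = bbC163" "BBC ! 164 = bbC164" "BBC ! 165 = bbC165" "BBC ! 166 = bbC166" "BBC ! 167 = bbC167" "BBC ! 168 = bbC168" "BBC ! 169 = bbC169" "BBC ! 170 = bbC170" "BBC ! 171 = bbC171" "BBC ! 172 = bbC172" "BBC ! 173 = bbC173" "BBC ! 174 = bbC174" "BBC ! 175 = bbC175" "BBC ! 176 = bbC176" "BBC ! 177 = bbC177" "BBC ! 178 = bbC178" "BBC ! 179 = bbC179" "BBC ! 180 = bbC180" "BBC ! 181 = bbC181" "BBC ! 182 = bbC182" "BBC ! 183 = bbC183" "BBC ! 184 = bbC184" "BBC ! 185 = bbC185" "BBC ! 186 = bbC186" "BBC ! 187 = bbC187" "BBC ! 188 = bbC188" "BBC ! 189 = bbC189" "BBC ! 190 = bbC190" "BBC ! 191 = bbC191" "BBC ! 192 = bbC192" "BBC ! 193 = bbC193" "BBC ! 194 = bbC194" "BBC ! 195 = bbC195" "BBC ! 196 = bbC196" "BBC ! 197 = bbC197" "BBC ! 198 = bbC198" "BBC ! 199 = bbC199" "BBC ! Suc 0 = bbC1"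
  by (simp_all add: BBC_def)
lemmas bbC_defs = bbC0_def bbC1_def bbC2_def bbC3_def bbC4_def bbC5_def bbC6_def bbC7_def bbC8_def bbC9_def bbC10_def bbC11_def bbC12_def bbC13_def bbC14_def bbC15_def bbC16_def bbC17_def bbC18_def bbC19_def bbC20_def bbC21_def bbC22_def bbC23_def bbC24_def bbC25_def bbC26_def bbC27_def bbC28_def bbC29_def bbC30_def bbC31_def bbC32_def bbC33_def bbC34_def bbC35_def bbC36_def bbC37_def bbC38_def bbC39_def bbC40_def bbC41_def bbC42_def bbC43_def bbC44_def bbC45_def bbC46_def bbC47_def bbC48_def bbC49_def bbC50_def bbC51_def bbC52_def bbC53_def bbC54_def bbC55_def bbC56_def bbC57_def bbC58_def bbC59_def bbC60_def bbC61_def bbC62_def bbC63_def bbC64_def bbC65_def bbC66_def bbC67_def bbC68_def bbC69_def bbC70_def bbC71_def bbC72_def bbC73_def bbC74_def bbC75_def bbC76_def bbC77_def bbC78_def bbC79_def bbC80_def bbC81_def bbC82_def bbC83_def bbC84_def bbC85_def bbC86_def bbC87_def bbC88_def bbC89_def bbC90_def bbC91_def bbC92_def bbC93_def bbC94_def bbC95_def bbC96_def bbC97_def bbC98_def bbC99_def bbC100_def bbC101_def bbC102_def bbC103_def bbC104_def bbC105_def bbC106_def bbC107_def bbC108_def bbC109_def bbC110_def bbC111_def bbC112_def bbC113_def bbC114_def bbC115_def bbC116_def bbC117_def bbC118_def bbC119_def bbC120_def bbC121_def bbC122_def bbC123_def bbC124_def bbC125_def bbC126_def bbC127_def bbC128_def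 bbC129_def bbC130_def bbC131_def bbC132_def bbC133_def bbC134_def bbC135_def bbC136_def bbC137_def bbC138_def bbC139_def bbC140_def bbC141_def bbC142_def bbC143_def bbC144_def bbC145_def bbC146_def bbC147_def bbC148_def bbC149_def bbC150_def bbC151_def bbC152_def bbC153_def bbC154_def bbC155_def bbC156_def bbC157_def bbC158_def bbC159_def bbC160_def bbC161_def bbC162_def bbC163_def bbC164_def bbC165_def bbC166_def bbC167_def bbC168_def bbC169_def bbC170_def bbC171_def bbC172_def bbC173_def bbC174_def bbC175_def bbC176_def bbC177_def bbC178_def bbC179_def bbC180_def bbC181_def bbC182_def bbC183_def bbC184_def bbC185_def bbC186_def bbC187_def bbC188_def bbC189_def bbC190_def bbC191_def bbC192_def bbC193_def bbC194_def bbC195_def bbC196_def bbC197_def bbC198_def bbC199_def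
lemma BBC_valid: "list_all (validB 10 5) BBC"
  by (simp add: BBC_def bbC_defs validB_def EL_def pt_def)
definition WC_0 :: "(nat \<times> nat \<times> nat) list" where "WC_0 = [(1,2,0),(175,0,0),(43,2,0),(41,2,0),(0,4,0),(0,2,0),(14,2,0),(185,0,0),(112,0,0),(58,0,0),(2,2,0),(1,4,1),(46,0,0),(85,2,0),(2,4,0),(149,2,0),(3,4,1),(23,2,0),(197,0,0),(80,0,0),(156,0,0),(178,0,0),(4,4,0),(86,2,0),(5,2,0),(187,0,0),(4,2,0),(100,2,0),(5,4,0),(157,2,0),(117,0,0),(6,4,0),(27,2,0),(143,2,0),(34,0,0),(12,2,0),(132,0,0),(76,2,0),(176,0,0),(181,0,0),(131,0,0),(67,0,0),(159,2,0),(7,4,6),(8,4,0),(8,2,0),(83,0,0),(9,4,7),(65,0,0),(53,0,0)]"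
lemma WC_0_len: "length WC_0 = 50" by (simp add: WC_0_def)
lemma WC_0_ok: "chkW 10 5 BBC 0 WC_0"
  by (simp add: WC_0_def BBC_nth BBC_len bbC_defs chk_simps)
definition WC_1 :: "(nat \<times> nat \<times> nat) list" where "WC_1 = [(10,4,0),(31,2,0),(98,0,0),(147,0,0),(11,4,5),(91,2,0),(173,0,0),(12,4,2),(75,0,0),(10,2,0),(54,2,0),(55,2,0),(95,0,0),(141,0,0),(13,4,6),(139,2,0),(14,4,0),(73,0,0),(174,0,0),(16,2,0),(9,2,0),(18,2,0),(151,2,0),(15,4,0),(133,0,0),(71,2,0),(87,0,0),(97,2,0),(154,0,0),(16,4,0),(129,2,0),(6,2,0),(128,0,0),(56,2,0),(69,2,0),(17,4,0),(36,0,0),(7,2,0),(144,2,0),(113,0,0),(61,2,0),(186,0,0),(64,2,0),(18,4,2),(19,4,0),(72,2,0),(20,2,0),(20,4,0),(106,0,0),(19,2,0)]"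
lemma WC_1_len: "length WC_1 = 50" by (simp add: WC_1_def)
lemma WC_1_ok: "chkW 10 5 BBC 50 WC_1"
  by (simp add: WC_1_def BBC_nth BBC_len bbC_defs chk_simps)
definition WC_2 :: "(nat \<times> nat \<times> nat) list" where "WC_2 = [(21,4,0),(0,3,0),(51,0,0),(43,3,0),(22,2,0),(112,2,0),(175,2,0),(162,0,0),(14,0,0),(22,4,0),(23,3,0),(44,2,0),(145,0,0),(33,2,0),(2,3,0),(149,0,0),(23,4,0),(80,2,0),(136,2,0),(195,0,0),(4,3,0),(157,0,0),(24,4,7),(25,4,2),(26,4,0),(142,0,0),(100,0,0),(86,0,0),(120,2,0),(121,2,0),(177,0,0),(158,0,0),(143,0,0),(34,2,0),(27,3,0),(27,4,0),(50,2,0),(132,1,0),(28,4,3),(181,1,0),(65,1,0),(49,0,0),(29,4,0),(110,2,0),(59,0,0),(29,2,0),(63,2,0),(67,1,0),(131,1,0),(39,2,0)]"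
lemma WC_2_len: "length WC_2 = 50" by (simp add: WC_2_def)
lemma WC_2_ok: "chkW 10 5 BBC 100 WC_2"
  by (simp add: WC_2_def BBC_nth BBC_len bbC_defs chk_simps)
definition WC_3 :: "(nat \<times> nat \<times> nat) list" where "WC_3 = [(172,0,0),(75,2,0),(31,3,0),(183,0,0),(30,4,0),(24,2,0),(31,4,0),(140,2,0),(30,2,0),(91,0,0),(118,0,0),(141,1,0),(32,4,8),(33,4,0),(73,2,0),(55,3,0),(34,4,3),(124,2,0),(35,4,0),(36,4,8),(15,2,0),(45,0,0),(184,0,0),(37,4,8),(163,0,0),(9,0,0),(115,2,0),(38,4,0),(71,0,0),(133,1,0),(56,3,0),(36,2,0),(17,2,0),(102,0,0),(32,2,0),(128,1,0),(57,2,0),(7,0,0),(144,0,0),(129,0,0),(199,0,0),(64,0,0),(19,3,0),(20,3,0),(39,4,5),(37,2,0),(61,3,0),(164,0,0),(35,2,0),(40,4,9)]"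
lemma WC_3_len: "length WC_3 = 50" by (simp add: WC_3_def)
lemma WC_3_ok: "chkW 10 5 BBC 150 WC_3"
  by (simp add: WC_3_def BBC_nth BBC_len bbC_defs chk_simps)
definition WC_4 :: "(nat \<times> nat \<times> nat) list" where "WC_4 = [(162,2,0),(41,4,0),(41,3,0),(42,4,0),(51,2,0),(43,4,0),(58,2,0),(1,0,0),(185,1,0),(22,3,0),(197,1,0),(145,2,0),(44,4,0),(85,0,0),(195,1,0),(45,4,4),(46,2,0),(44,3,0),(136,0,0),(33,0,0),(187,1,0),(120,0,0),(156,2,0),(142,2,0),(178,2,0),(121,0,0),(5,3,0),(46,4,1),(47,4,0),(48,4,2),(50,3,0),(12,0,0),(49,4,0),(176,2,0),(76,0,0),(117,2,0),(50,4,0),(51,4,3),(158,2,0),(177,1,0),(39,0,0),(159,0,0),(49,2,0),(53,2,0),(110,0,0),(63,0,0),(59,2,0),(8,3,0),(29,3,0),(83,2,0)]"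
lemma WC_4_len: "length WC_4 = 50" by (simp add: WC_4_def)
lemma WC_4_ok: "chkW 10 5 BBC 200 WC_4"
  by (simp add: WC_4_def BBC_nth BBC_len bbC_defs chk_simps)
definition WC_5 :: "(nat \<times> nat \<times> nat) list" where "WC_5 = [(52,4,5),(140,0,0),(98,2,0),(172,1,0),(173,2,0),(30,3,0),(24,0,0),(183,1,0),(147,1,0),(10,3,0),(16,0,0),(54,3,0),(118,1,0),(53,4,0),(124,0,0),(95,2,0),(54,4,0),(174,2,0),(55,4,0),(139,0,0),(18,0,0),(45,2,0),(163,2,0),(115,0,0),(154,1,0),(97,0,0),(15,3,0),(87,2,0),(151,0,0),(184,1,0),(17,3,0),(102,2,0),(56,4,0),(57,4,0),(113,2,0),(32,0,0),(58,4,0),(57,3,0),(6,0,0),(69,0,0),(35,0,0),(59,4,5),(60,4,9),(61,4,0),(72,0,0),(186,1,0),(106,2,0),(164,1,0),(199,1,0),(37,0,0)]"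
lemma WC_5_len: "length WC_5 = 50" by (simp add: WC_5_def)
lemma WC_5_ok: "chkW 10 5 BBC 250 WC_5"
  by (simp add: WC_5_def BBC_nth BBC_len bbC_defs chk_simps)
definition WC_6 :: "(nat \<times> nat \<times> nat) list" where "WC_6 = [(62,2,0),(89,0,0),(62,4,0),(107,0,0),(2,0,0),(9,1,0),(61,0,0),(150,0,0),(131,2,0),(129,1,0),(196,0,0),(127,2,0),(31,0,0),(138,2,0),(108,0,0),(55,0,0),(175,1,0),(67,2,0),(78,2,0),(126,2,0),(21,2,0),(64,3,0),(84,2,0),(43,0,0),(27,0,0),(128,2,0),(63,4,0),(64,4,0),(88,0,0),(114,0,0),(56,0,0),(141,2,0),(143,1,0),(94,0,0),(122,0,0),(65,4,5),(66,4,0),(86,3,0),(66,2,0),(67,4,2),(79,2,0),(68,4,2),(69,4,0),(34,1,0),(26,2,0),(116,0,0),(104,0,0),(119,0,0),(190,2,0),(133,2,0)]"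
lemma WC_6_len: "length WC_6 = 50" by (simp add: WC_6_def)
lemma WC_6_ok: "chkW 10 5 BBC 300 WC_6"
  by (simp add: WC_6_def BBC_nth BBC_len bbC_defs chk_simps)
definition WC_7 :: "(nat \<times> nat \<times> nat) list" where "WC_7 = [(70,4,6),(0,0,0),(71,4,0),(72,4,0),(73,4,0),(149,1,0),(193,0,0),(38,2,0),(71,3,0),(91,3,0),(4,0,0),(36,1,0),(74,4,6),(20,0,0),(111,2,0),(198,2,0),(96,2,0),(132,2,0),(14,3,0),(47,0,0),(23,0,0),(75,4,0),(77,2,0),(76,4,0),(73,3,0),(77,4,0),(100,3,0),(7,1,0),(78,4,0),(90,0,0),(65,2,0),(75,3,0),(189,2,0),(103,0,0),(79,4,4),(112,3,0),(101,0,0),(80,4,0),(144,1,0),(137,2,0),(92,0,0),(157,1,0),(19,0,0),(194,0,0),(70,2,0),(105,0,0),(148,0,0),(80,3,0),(81,4,1),(181,2,0)]"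
lemma WC_7_len: "length WC_7 = 50" by (simp add: WC_7_def)
lemma WC_7_ok: "chkW 10 5 BBC 350 WC_7"
  by (simp add: WC_7_def BBC_nth BBC_len bbC_defs chk_simps)
definition WC_8 :: "(nat \<times> nat \<times> nat) list" where "WC_8 = [(89,2,0),(54,0,0),(156,1,0),(107,1,0),(62,3,0),(117,3,0),(82,4,0),(1,1,0),(150,2,0),(83,4,0),(18,1,0),(196,1,0),(78,0,0),(126,0,0),(178,1,0),(186,2,0),(138,0,0),(108,1,0),(6,3,0),(127,0,0),(21,0,0),(159,1,0),(98,3,0),(84,3,0),(84,4,0),(95,3,0),(46,1,0),(114,2,0),(151,1,0),(88,2,0),(94,2,0),(85,4,0),(41,0,0),(85,3,0),(122,1,0),(86,4,0),(66,3,0),(87,4,0),(147,2,0),(88,4,0),(89,4,0),(116,1,0),(119,1,0),(26,0,0),(104,2,0),(79,0,0),(5,0,0),(190,0,0),(90,4,7),(69,3,0)]"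
lemma WC_8_len: "length WC_8 = 50" by (simp add: WC_8_def)
lemma WC_8_ok: "chkW 10 5 BBC 400 WC_8"
  by (simp add: WC_8_def BBC_nth BBC_len bbC_defs chk_simps)
definition WC_9 :: "(nat \<times> nat \<times> nat) list" where "WC_9 = [(187,2,0),(12,1,0),(91,4,0),(92,4,6),(72,3,0),(93,4,2),(38,0,0),(8,0,0),(193,1,0),(139,1,0),(111,0,0),(96,3,0),(198,0,0),(94,4,3),(173,1,0),(95,4,0),(96,4,0),(87,3,0),(47,2,0),(83,3,0),(97,4,0),(90,2,0),(98,4,0),(99,4,4),(76,3,0),(97,3,0),(77,3,0),(100,4,0),(185,2,0),(101,4,0),(197,2,0),(102,4,0),(137,0,0),(176,1,0),(154,2,0),(103,1,0),(106,3,0),(174,1,0),(189,0,0),(101,2,0),(16,3,0),(70,0,0),(148,2,0),(53,3,0),(113,3,0),(105,2,0),(58,3,0),(92,2,0),(194,2,0),(10,0,0)]"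
lemma WC_9_len: "length WC_9 = 50" by (simp add: WC_9_def)
lemma WC_9_ok: "chkW 10 5 BBC 450 WC_9"
  by (simp add: WC_9_def BBC_nth BBC_len bbC_defs chk_simps)
definition WC_10 :: "(nat \<times> nat \<times> nat) list" where "WC_10 = [(21,3,0),(196,2,0),(118,2,0),(172,2,0),(62,0,0),(79,1,0),(15,0,0),(92,1,0),(199,2,0),(177,2,0),(89,3,0),(45,1,0),(49,3,0),(103,4,8),(104,4,0),(105,4,0),(106,4,0),(44,0,0),(158,1,0),(127,1,0),(17,0,0),(145,1,0),(107,4,9),(84,0,0),(51,1,0),(108,4,8),(77,0,0),(109,4,1),(189,1,0),(184,2,0),(94,1,0),(102,3,0),(110,4,0),(107,2,0),(110,3,0),(103,2,0),(138,1,0),(183,2,0),(194,1,0),(33,3,0),(111,3,0),(70,1,0),(163,1,0),(26,3,0),(122,2,0),(32,1,0),(59,1,0),(108,2,0),(111,4,0),(22,0,0)]"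
lemma WC_10_len: "length WC_10 = 50" by (simp add: WC_10_def)
lemma WC_10_ok: "chkW 10 5 BBC 500 WC_10"
  by (simp add: WC_10_def BBC_nth BBC_len bbC_defs chk_simps)
definition WC_11 :: "(nat \<times> nat \<times> nat) list" where "WC_11 = [(112,4,0),(116,2,0),(198,1,0),(142,1,0),(113,4,0),(105,3,0),(24,1,0),(114,4,0),(29,0,0),(37,1,0),(50,0,0),(96,0,0),(148,1,0),(115,3,0),(104,3,0),(63,3,0),(115,4,0),(57,0,0),(193,2,0),(101,3,0),(162,1,0),(140,1,0),(119,2,0),(116,4,2),(124,1,0),(117,4,0),(38,3,0),(164,2,0),(150,1,0),(118,4,7),(35,3,0),(120,3,0),(78,3,0),(119,4,1),(120,4,0),(30,0,0),(66,0,0),(190,1,0),(136,1,0),(88,3,0),(39,1,0),(90,1,0),(137,1,0),(126,1,0),(195,2,0),(121,3,0),(121,4,0),(114,3,0),(47,3,0),(122,4,5)]"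
lemma WC_11_len: "length WC_11 = 50" by (simp add: WC_11_def)
lemma WC_11_ok: "chkW 10 5 BBC 550 WC_11"
  by (simp add: WC_11_def BBC_nth BBC_len bbC_defs chk_simps)
definition WC_12 :: "(nat \<times> nat \<times> nat) list" where "WC_12 = [(144,3,2),(170,0,0),(123,4,0),(19,1,1),(91,1,5),(123,2,0),(74,2,0),(153,0,0),(82,0,0),(143,3,7),(34,3,7),(124,4,4),(125,4,6),(167,0,0),(161,0,0),(86,1,8),(175,3,0),(61,1,1),(73,1,4),(191,0,0),(126,4,1),(129,3,2),(127,4,1),(43,1,0),(130,2,0),(128,4,0),(146,0,0),(129,4,2),(130,4,0),(68,2,0),(99,0,0),(131,4,3),(64,1,1),(93,0,0),(132,3,7),(180,0,0),(75,1,5),(179,0,0),(9,3,3),(48,0,0),(135,2,0),(109,0,0),(182,0,0),(169,0,0),(149,3,9),(132,4,8),(65,3,6),(128,3,2),(4,1,8),(133,4,0)]"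
lemma WC_12_len: "length WC_12 = 50" by (simp add: WC_12_def)
lemma WC_12_ok: "chkW 10 5 BBC 600 WC_12"
  by (simp add: WC_12_def BBC_nth BBC_len bbC_defs chk_simps)
definition WC_13 :: "(nat \<times> nat \<times> nat) list" where "WC_13 = [(60,0,0),(0,1,0),(56,1,2),(52,0,0),(100,1,8),(152,2,0),(125,2,0),(3,2,0),(134,4,8),(55,1,4),(40,2,0),(25,2,0),(135,4,2),(168,0,0),(131,3,6),(155,2,0),(181,3,7),(31,1,5),(14,1,0),(23,1,9),(134,2,0),(42,0,0),(133,3,3),(67,3,6),(20,1,1),(141,3,4),(188,0,0),(136,4,9),(137,4,9),(157,3,8),(138,4,7),(71,1,3),(166,2,0),(36,3,2),(171,2,0),(112,1,0),(80,1,9),(81,2,0),(13,2,0),(160,2,0),(139,4,4),(27,1,7),(140,4,5),(2,1,9),(165,0,0),(28,2,0),(11,2,0),(141,4,6),(192,0,0),(7,3,2)]"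
lemma WC_13_len: "length WC_13 = 50" by (simp add: WC_13_def)
lemma WC_13_ok: "chkW 10 5 BBC 650 WC_13"
  by (simp add: WC_13_def BBC_nth BBC_len bbC_defs chk_simps)
definition WC_14 :: "(nat \<times> nat \<times> nat) list" where "WC_14 = [(123,3,0),(142,4,8),(170,2,0),(143,4,7),(153,2,0),(74,0,0),(82,2,0),(1,3,0),(97,1,3),(144,4,2),(145,4,9),(161,2,0),(146,4,9),(8,1,6),(167,1,0),(46,3,9),(113,1,2),(154,3,3),(191,1,0),(173,3,5),(130,3,0),(174,3,4),(85,1,9),(146,2,0),(5,1,8),(83,1,6),(186,3,1),(147,4,9),(12,3,7),(68,0,0),(6,1,2),(179,1,0),(41,1,0),(93,2,0),(16,1,4),(180,2,0),(148,4,4),(48,2,0),(187,3,8),(99,2,0),(149,4,9),(76,1,7),(150,4,4),(18,3,3),(10,1,5),(54,1,4),(109,1,0),(135,0,0),(169,1,0),(182,2,0)]"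
lemma WC_14_len: "length WC_14 = 50" by (simp add: WC_14_def)
lemma WC_14_ok: "chkW 10 5 BBC 700 WC_14"
  by (simp add: WC_14_def BBC_nth BBC_len bbC_defs chk_simps)
definition WC_15 :: "(nat \<times> nat \<times> nat) list" where "WC_15 = [(176,3,7),(151,3,3),(3,3,0),(60,2,0),(125,0,0),(52,2,0),(151,4,3),(152,3,0),(152,4,0),(53,1,6),(153,4,6),(69,1,2),(154,4,8),(155,4,0),(155,3,0),(72,1,1),(168,1,0),(25,0,0),(40,0,0),(95,1,4),(156,4,8),(157,4,8),(117,1,7),(42,2,0),(134,0,0),(158,4,7),(188,2,0),(98,1,5),(185,3,0),(197,3,9),(156,3,8),(13,3,0),(166,0,0),(147,3,5),(160,3,0),(159,4,6),(160,4,0),(159,3,6),(171,0,0),(81,0,0),(87,1,3),(28,0,0),(178,3,8),(139,3,4),(192,2,0),(165,2,0),(58,1,0),(106,1,1),(11,3,0),(161,4,8)]"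
lemma WC_15_len: "length WC_15 = 50" by (simp add: WC_15_def)
lemma WC_15_ok: "chkW 10 5 BBC 750 WC_15"
  by (simp add: WC_15_def BBC_nth BBC_len bbC_defs chk_simps)
definition WC_16 :: "(nat \<times> nat \<times> nat) list" where "WC_16 = [(162,4,0),(24,3,5),(59,3,6),(60,3,0),(134,1,0),(163,4,3),(44,1,9),(135,1,0),(40,3,0),(99,1,0),(145,3,9),(164,4,4),(170,3,0),(42,3,0),(29,1,6),(165,4,0),(109,2,0),(25,3,0),(124,3,4),(199,3,1),(166,4,0),(63,1,6),(166,3,0),(167,4,9),(51,3,0),(168,4,9),(140,3,5),(169,4,9),(33,1,9),(182,1,0),(30,1,5),(142,3,8),(170,4,0),(93,1,0),(167,2,0),(52,3,0),(168,2,0),(50,1,7),(169,2,0),(15,1,3),(130,0,0),(161,1,0),(17,1,2),(171,4,0),(45,3,3),(165,3,0),(118,3,4),(172,4,4),(171,3,0),(22,1,0)]"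
lemma WC_16_len: "length WC_16 = 50" by (simp add: WC_16_def)
lemma WC_16_ok: "chkW 10 5 BBC 800 WC_16"
  by (simp add: WC_16_def BBC_nth BBC_len bbC_defs chk_simps)
definition WC_17 :: "(nat \<times> nat \<times> nat) list" where "WC_17 = [(123,0,0),(28,3,0),(184,3,3),(102,1,2),(155,0,0),(180,3,0),(39,3,6),(152,0,0),(172,3,5),(173,4,5),(37,3,1),(174,4,4),(175,4,0),(146,1,0),(125,1,0),(74,1,0),(188,1,0),(32,3,2),(11,0,0),(120,1,8),(162,3,0),(179,2,0),(3,0,0),(121,1,8),(153,1,0),(163,3,3),(177,3,7),(136,3,9),(49,1,6),(81,1,0),(176,4,7),(13,0,0),(183,3,5),(195,3,9),(192,1,0),(158,3,7),(82,1,0),(177,4,8),(164,3,1),(57,1,2),(110,1,6),(35,1,1),(178,4,8),(179,4,2),(160,0,0),(180,4,0),(115,1,3),(48,3,0),(191,2,0),(68,1,0)]"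
lemma WC_17_len: "length WC_17 = 50" by (simp add: WC_17_def)
lemma WC_17_ok: "chkW 10 5 BBC 850 WC_17"
  by (simp add: WC_17_def BBC_nth BBC_len bbC_defs chk_simps)
definition WC_18 :: "(nat \<times> nat \<times> nat) list" where "WC_18 = [(93,3,7),(84,1,8),(152,1,5),(13,1,2),(62,1,0),(96,1,4),(181,4,1),(94,3,7),(127,3,9),(26,1,6),(89,1,0),(122,3,7),(170,1,0),(193,3,5),(137,3,2),(182,4,6),(160,1,2),(116,3,6),(92,3,1),(125,3,5),(104,1,6),(38,1,5),(180,1,7),(167,3,9),(90,3,3),(138,3,9),(183,4,9),(3,1,5),(130,1,8),(184,4,0),(161,3,9),(185,4,3),(47,1,4),(107,3,0),(186,4,9),(187,4,5),(108,3,9),(134,3,3),(119,3,6),(188,4,3),(189,3,2),(146,3,8),(40,1,4),(190,3,6),(166,1,2),(189,4,2),(42,1,3),(190,4,6),(179,3,7),(194,3,1)]"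
lemma WC_18_len: "length WC_18 = 50" by (simp add: WC_18_def)
lemma WC_18_ok: "chkW 10 5 BBC 900 WC_18"
  by (simp add: WC_18_def BBC_nth BBC_len bbC_defs chk_simps)
definition WC_19 :: "(nat \<times> nat \<times> nat) list" where "WC_19 = [(123,1,0),(25,1,4),(70,3,1),(66,1,7),(191,4,6),(192,4,1),(165,1,1),(103,3,2),(60,1,5),(77,1,3),(171,1,2),(79,3,6),(28,1,1),(135,3,6),(48,1,7),(74,3,0),(105,1,1),(88,1,8),(193,4,0),(194,4,1),(168,3,4),(78,1,9),(109,3,6),(148,3,1),(153,3,0),(114,1,8),(99,3,7),(68,3,8),(150,3,0),(11,1,1),(52,1,5),(101,1,2),(126,3,9),(195,4,9),(111,1,4),(182,3,6),(82,3,0),(191,3,9),(21,1,8),(196,4,8),(196,3,9),(81,3,2),(197,4,2),(198,4,4),(169,3,6),(192,3,1),(198,3,4),(199,4,9),(155,1,4),(188,3,3)]"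
lemma WC_19_len: "length WC_19 = 50" by (simp add: WC_19_def)
lemma WC_19_ok: "chkW 10 5 BBC 950 WC_19"
  by (simp add: WC_19_def BBC_nth BBC_len bbC_defs chk_simps)
definition WC where "WC = WC_0 @ WC_1 @ WC_2 @ WC_3 @ WC_4 @ WC_5 @ WC_6 @ WC_7 @ WC_8 @ WC_9 @ WC_10 @ WC_11 @ WC_12 @ WC_13 @ WC_14 @ WC_15 @ WC_16 @ WC_17 @ WC_18 @ WC_19"
lemma WC_ok: "chkW 10 5 BBC 0 WC"
  unfolding WC_def chkW_append by (simp add: WC_0_ok WC_0_len WC_1_ok WC_1_len WC_2_ok WC_2_len WC_3_ok WC_3_len WC_4_ok WC_4_len WC_5_ok WC_5_len WC_6_ok WC_6_len WC_7_ok WC_7_len WC_8_ok WC_8_len WC_9_ok WC_9_len WC_10_ok WC_10_len WC_11_ok WC_11_len WC_12_ok WC_12_len WC_13_ok WC_13_len WC_14_ok WC_14_len WC_15_ok WC_15_len WC_16_ok WC_16_len WC_17_ok WC_17_len WC_18_ok WC_18_len WC_19_ok WC_19_len)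
lemma WC_length: "length WC = 1000"
  unfolding WC_def by (simp add: WC_0_len WC_1_len WC_2_len WC_3_len WC_4_len WC_5_len WC_6_len WC_7_len WC_8_len WC_9_len WC_10_len WC_11_len WC_12_len WC_13_len WC_14_len WC_15_len WC_16_len WC_17_len WC_18_len WC_19_len)
interpretation C: gdd_data 10 5 BBC WC
  by unfold_locales (simp_all add: BBC_valid WC_ok WC_length BBC_len GT5)

lemma ex_nat:
  assumes "GDD_K4e (X :: (nat \<times> nat) set) G B g n"
  shows "\<exists>(X' :: nat set) G' B'. GDD_K4e X' G' B' g n"
  using GDD_transfer[OF assms inj_prod_encode] by blast

theorem lemma3p3:
  shows "\<forall>(g, n) \<in> {(5::nat, 4::nat), (5, 6), (10, 5)}.
           \<exists>(X :: nat set) \<G> \<B>. GDD_K4e X \<G> \<B> g n"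
  using ex_nat[OF A.gdd] ex_nat[OF B.gdd] ex_nat[OF C.gdd] by simp

end
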